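(* Let $(M^n,g_{ij},F)$, $n\ge 3$, be a gradient shrinking or expanding Ricci soliton, i.e. $R_{ij}=\nabla_i\nabla_jF+\rho g_{ij}$ with $\rho=1/2$ (shrinking) or $\rho=-1/2$ (expanding), with vanishing Weyl tensor $W_{ijkl}=0$. Let $G_\rho=|\nabla F|^2+2\rho F$. Then the Cotton tensor satisfies $$ |C_{ijk}|^2=\frac{1}{(n-2)^2}\Big(|R_{ik} \nabla_j F - R_{ij} \nabla_k F|^2-\frac{2}{n-1} \big|R\nabla F-\tfrac{1}{2}\nabla G_{\rho}\big|^2\Big).$$
   Context: $R$ is the scalar curvature. The Cotton tensor is $C_{ijk}=\nabla_k R_{ij}-\nabla_j R_{ik}-\frac{1}{2(n-1)}(g_{ij}\nabla_k R-g_{ik}\nabla_j R)$. Norms of tensors are full contractions with the metric. *)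

theory Defs
  imports "HOL-Analysis.Analysis"
begin

(* Local coordinate description of a Riemannian manifold: an open chart
   U \<subseteq> R^n (n = CARD('n)), coordinates indexed by the finite type 'n,
   metric components g i j : U \<rightarrow> R. *)

definition pd :: "'n::finite \<Rightarrow> (real^'n \<Rightarrow> real) \<Rightarrow> real^'n \<Rightarrow> real" where
  "pd i f x = frechet_derivative f (at x) (axis i 1)"

fun pds :: "'n::finite list \<Rightarrow> (real^'n \<Rightarrow> real) \<Rightarrow> real^'n \<Rightarrow> real" where
  "pds [] f = f"
| "pds (k # ks) f = pd k (pds ks f)"

definition smooth_on :: "(real^'n::finite) set \<Rightarrow> (real^'n \<Rightarrow> real) \<Rightarrow> bool" where
  "smooth_on U f \<longleftrightarrow> (\<forall>ks. pds ks f differentiable_on U)"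

definition gmat :: "('n::finite \<Rightarrow> 'n \<Rightarrow> real^'n \<Rightarrow> real) \<Rightarrow> real^'n \<Rightarrow> real^'n^'n" where
  "gmat g x = (\<chi> i j. g i j x)"

definition ginv :: "('n::finite \<Rightarrow> 'n \<Rightarrow> real^'n \<Rightarrow> real) \<Rightarrow> 'n \<Rightarrow> 'n \<Rightarrow> real^'n \<Rightarrow> real" where
  "ginv g i j x = matrix_inv (gmat g x) $ i $ j"

definition is_metric :: "(real^'n::finite) set \<Rightarrow> ('n \<Rightarrow> 'n \<Rightarrow> real^'n \<Rightarrow> real) \<Rightarrow> bool" where
  "is_metric U g \<longleftrightarrow> open U \<and> (\<forall>i j. smooth_on U (g i j))
     \<and> (\<forall>x\<in>U. \<forall>i j. g i j x = g j i x)
     \<and> (\<forall>x\<in>U. \<forall>v. v \<noteq> 0 \<longrightarrow> v \<bullet> (gmat g x *v v) > 0)"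

definition chr :: "('n::finite \<Rightarrow> 'n \<Rightarrow> real^'n \<Rightarrow> real) \<Rightarrow> 'n \<Rightarrow> 'n \<Rightarrow> 'n \<Rightarrow> real^'n \<Rightarrow> real" where
  "chr g k i j x = (1/2) * (\<Sum>l\<in>UNIV. ginv g k l x *
      (pd i (g j l) x + pd j (g i l) x - pd l (g i j) x))"

(* R_{ijk}^l, with R(d_i,d_j)d_k = R_{ijk}^l d_l *)
definition riem :: "('n::finite \<Rightarrow> 'n \<Rightarrow> real^'n \<Rightarrow> real) \<Rightarrow> 'n \<Rightarrow> 'n \<Rightarrow> 'n \<Rightarrow> 'n \<Rightarrow> real^'n \<Rightarrow> real" where
  "riem g i j k l x = pd i (chr g l j k) x - pd j (chr g l i k) x
     + (\<Sum>m\<in>UNIV. chr g l i m x * chr g m j k x - chr g l j m x * chr g m i k x)"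

definition ric :: "('n::finite \<Rightarrow> 'n \<Rightarrow> real^'n \<Rightarrow> real) \<Rightarrow> 'n \<Rightarrow> 'n \<Rightarrow> real^'n \<Rightarrow> real" where
  "ric g j k x = (\<Sum>i\<in>UNIV. riem g i j k i x)"

definition scal :: "('n::finite \<Rightarrow> 'n \<Rightarrow> real^'n \<Rightarrow> real) \<Rightarrow> real^'n \<Rightarrow> real" where
  "scal g x = (\<Sum>i\<in>UNIV. \<Sum>j\<in>UNIV. ginv g i j x * ric g i j x)"

definition rm :: "('n::finite \<Rightarrow> 'n \<Rightarrow> real^'n \<Rightarrow> real) \<Rightarrow> 'n \<Rightarrow> 'n \<Rightarrow> 'n \<Rightarrow> 'n \<Rightarrow> real^'n \<Rightarrow> real" where
  "rm g i j k l x = (\<Sum>m\<in>UNIV. riem g i j k m x * g m l x)"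

(* Weyl tensor: Rm minus its Ricci part (Kulkarni-Nomizu decomposition) *)
definition weyl :: "('n::finite \<Rightarrow> 'n \<Rightarrow> real^'n \<Rightarrow> real) \<Rightarrow> 'n \<Rightarrow> 'n \<Rightarrow> 'n \<Rightarrow> 'n \<Rightarrow> real^'n \<Rightarrow> real" where
  "weyl g i j k l x = rm g i j k l x
     - (1 / (real CARD('n) - 2)) * (ric g j k x * g i l x - ric g i k x * g j l x
                                   + ric g i l x * g j k x - ric g j l x * g i k x)
     + (scal g x / ((real CARD('n) - 1) * (real CARD('n) - 2)))
         * (g j k x * g i l x - g i k x * g j l x)"

definition hess :: "('n::finite \<Rightarrow> 'n \<Rightarrow> real^'n \<Rightarrow> real) \<Rightarrow> (real^'n \<Rightarrow> real) \<Rightarrow> 'n \<Rightarrow> 'n \<Rightarrow> real^'n \<Rightarrow> real" where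
  "hess g F i j x = pd i (pd j F) x - (\<Sum>k\<in>UNIV. chr g k i j x * pd k F x)"

definition cov_ric :: "('n::finite \<Rightarrow> 'n \<Rightarrow> real^'n \<Rightarrow> real) \<Rightarrow> 'n \<Rightarrow> 'n \<Rightarrow> 'n \<Rightarrow> real^'n \<Rightarrow> real" where
  "cov_ric g k i j x = pd k (ric g i j) x
     - (\<Sum>m\<in>UNIV. chr g m k i x * ric g m j x + chr g m k j x * ric g i m x)"

definition cotton :: "('n::finite \<Rightarrow> 'n \<Rightarrow> real^'n \<Rightarrow> real) \<Rightarrow> 'n \<Rightarrow> 'n \<Rightarrow> 'n \<Rightarrow> real^'n \<Rightarrow> real" where
  "cotton g i j k x = cov_ric g k i j x - cov_ric g j i k x
     - (1 / (2 * (real CARD('n) - 1))) * (g i j x * pd k (scal g) x - g i k x * pd j (scal g) x)"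

definition norm3 :: "('n::finite \<Rightarrow> 'n \<Rightarrow> real^'n \<Rightarrow> real) \<Rightarrow> real^'n \<Rightarrow> ('n \<Rightarrow> 'n \<Rightarrow> 'n \<Rightarrow> real) \<Rightarrow> real" where
  "norm3 g x T = (\<Sum>i\<in>UNIV. \<Sum>j\<in>UNIV. \<Sum>k\<in>UNIV. \<Sum>a\<in>UNIV. \<Sum>b\<in>UNIV. \<Sum>c\<in>UNIV.
      ginv g i a x * ginv g j b x * ginv g k c x * T i j k * T a b c)"

definition norm1 :: "('n::finite \<Rightarrow> 'n \<Rightarrow> real^'n \<Rightarrow> real) \<Rightarrow> real^'n \<Rightarrow> ('n \<Rightarrow> real) \<Rightarrow> real" where
  "norm1 g x V = (\<Sum>a\<in>UNIV. \<Sum>b\<in>UNIV. ginv g a b x * V a * V b)"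

definition Grho :: "('n::finite \<Rightarrow> 'n \<Rightarrow> real^'n \<Rightarrow> real) \<Rightarrow> (real^'n \<Rightarrow> real) \<Rightarrow> real \<Rightarrow> real^'n \<Rightarrow> real" where
  "Grho g F \<rho> x = norm1 g x (\<lambda>a. pd a F x) + 2 * \<rho> * F x"

end

theory Submission
  imports Defs
begin


lemma pd_local:
  assumes "open U" "x \<in> U" "\<And>y. y \<in> U \<Longrightarrow> f y = h y"
  shows "pd k f x = pd k h x"
proof -
  have "(\<lambda>D. (f has_derivative D) (at x)) = (\<lambda>D. (h has_derivative D) (at x))"
  proof
    fix D show "(f has_derivative D) (at x) = (h has_derivative D) (at x)"
      using has_derivative_transform_within_open[of f D x UNIV U h, OF _ assms(1,2)]
            has_derivative_transform_within_open[of h D x UNIV U f, OF _ assms(1,2)] assms(3)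
      by auto
  qed
  then show ?thesis unfolding pd_def frechet_derivative_def by simp
qed

lemma pd_eq: "(f has_derivative D) (at x) \<Longrightarrow> pd k f x = D (axis k 1)"
  unfolding pd_def by (metis frechet_derivative_at)

lemma pd_works: "f differentiable at x \<Longrightarrow> (f has_derivative (\<lambda>v. frechet_derivative f (at x) v)) (at x)"
  using frechet_derivative_works by auto

lemma pd_const[simp]: "pd k (\<lambda>y. c) x = 0"
  by (subst pd_eq[of _ "\<lambda>v. 0"]) (auto intro: derivative_eq_intros)

lemma pd_add:
  assumes "f differentiable at x" "h differentiable at x"
  shows "pd k (\<lambda>y. f y + h y) x = pd k f x + pd k h x"
  using pd_eq[OF has_derivative_add[OF pd_works[OF assms(1)] pd_works[OF assms(2)]], of k]
  unfolding pd_def by simp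

lemma pd_diff:
  assumes "f differentiable at x" "h differentiable at x"
  shows "pd k (\<lambda>y. f y - h y) x = pd k f x - pd k h x"
  using pd_eq[OF has_derivative_diff[OF pd_works[OF assms(1)] pd_works[OF assms(2)]], of k]
  unfolding pd_def by simp

lemma pd_mult:
  assumes "f differentiable at x" "h differentiable at x"
  shows "pd k (\<lambda>y. f y * h y) x = pd k f x * h x + f x * pd k h x"
  using pd_eq[OF has_derivative_mult[OF pd_works[OF assms(1)] pd_works[OF assms(2)]], of k]
  unfolding pd_def by (simp add: algebra_simps)

lemma pd_cmult:
  assumes "f differentiable at x"
  shows "pd k (\<lambda>y. c * f y) x = c * pd k f x"
  using pd_mult[OF _ assms, of "\<lambda>_. c"] by simp

lemma pd_sum:
  assumes "\<And>i. i \<in> S \<Longrightarrow> f i differentiable at x"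
  shows "pd k (\<lambda>y. \<Sum>i\<in>S. f i y) x = (\<Sum>i\<in>S. pd k (f i) x)"
proof (cases "finite S")
  case True
  have "((\<lambda>y. \<Sum>i\<in>S. f i y) has_derivative (\<lambda>v. \<Sum>i\<in>S. frechet_derivative (f i) (at x) v)) (at x)"
    by (rule has_derivative_sum) (use assms pd_works in auto)
  from pd_eq[OF this, of k] show ?thesis unfolding pd_def by simp
qed simp

lemma differentiable_sum_fun:
  assumes "\<And>i. i \<in> S \<Longrightarrow> f i differentiable at x"
  shows "(\<lambda>y. \<Sum>i\<in>S. f i y) differentiable at x"
  using assms by (induction S rule: infinite_finite_induct) auto

lemma pds_append: "pds (ks @ [k]) f = pds ks (pd k f)"
  by (induction ks) auto

lemma pds_local:
  assumes "open U" "\<And>y. y \<in> U \<Longrightarrow> f y = h y" "x \<in> U"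
  shows "pds ks f x = pds ks h x"
  using assms(3)
proof (induction ks arbitrary: x)
  case Nil then show ?case using assms by simp
next
  case (Cons k ks) then show ?case using pd_local[OF assms(1) Cons.prems, of "pds ks f" "pds ks h"] by simp
qed

lemma differentiable_on_cong_open:
  assumes "open U" "\<And>y. y \<in> U \<Longrightarrow> f y = h y" "f differentiable_on U"
  shows "h differentiable_on U"
  unfolding differentiable_on_eq_differentiable_at[OF assms(1)]
proof
  fix y assume y: "y \<in> U"
  then obtain D where "(f has_derivative D) (at y)"
    using assms(3) unfolding differentiable_on_eq_differentiable_at[OF assms(1)] differentiable_def by blast
  then have "(h has_derivative D) (at y)"
    using has_derivative_transform_within_open[of f D y UNIV U h, OF _ assms(1) y] assms(2) by auto
  then show "h differentiable at y" unfolding differentiable_def by blast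
qed


lemma mixed_aux:
  fixes f :: "real^'n::finite \<Rightarrow> real"
  assumes U: "open U" "x \<in> U" and fd: "\<And>y. y \<in> U \<Longrightarrow> f differentiable at y"
    and nu: "norm u \<le> 1" and nv: "norm v \<le> 1"
    and Gd: "((\<lambda>y. frechet_derivative f (at y) u) has_derivative L) (at x)"
    and e: "e > 0"
  shows "\<exists>d>0. \<forall>s. 0 < s \<and> s < d \<longrightarrow>
     \<bar>(f (x + s *\<^sub>R u + s *\<^sub>R v) - f (x + s *\<^sub>R u)) - (f (x + s *\<^sub>R v) - f x) - s^2 * L v\<bar> \<le> 3 * e * s^2"
proof -
  define G where "G y = frechet_derivative f (at y) u" for y
  have bl: "bounded_linear L" using Gd has_derivative_bounded_linear by blast
  obtain d1 where d1: "d1 > 0" "\<And>y. norm (y - x) < d1 \<Longrightarrow> norm (G y - G x - L (y - x)) \<le> e * norm (y - x)"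
    using Gd e unfolding has_derivative_at_alt G_def by blast
  obtain d2 where d2: "d2 > 0" "ball x d2 \<subseteq> U" using U openE by blast
  define d where "d = min d1 d2 / 2"
  have d: "d > 0" using d1 d2 d_def by auto
  have "\<forall>s. 0 < s \<and> s < d \<longrightarrow>
     \<bar>(f (x + s *\<^sub>R u + s *\<^sub>R v) - f (x + s *\<^sub>R u)) - (f (x + s *\<^sub>R v) - f x) - s^2 * L v\<bar> \<le> 3 * e * s^2"
  proof (intro allI impI)
    fix s assume s: "0 < s \<and> s < d"
    define \<phi> where "\<phi> t = f (x + t *\<^sub>R u + s *\<^sub>R v) - f (x + t *\<^sub>R u)" for t
    have inU: "x + t *\<^sub>R u + c *\<^sub>R v \<in> U" if "0 \<le> t" "t \<le> s" "0 \<le> c" "c \<le> s" for t c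
    proof -
      have "norm (t *\<^sub>R u + c *\<^sub>R v) \<le> t + c"
        using norm_triangle_le[of "t *\<^sub>R u" "c *\<^sub>R v"] nu nv that
        by (smt (verit) mult_left_le norm_scaleR)
      also have "\<dots> < d2" using that s d_def d1 by auto
      finally have "dist x (x + t *\<^sub>R u + c *\<^sub>R v) < d2"
        by (metis add.assoc add_diff_cancel_left' dist_commute dist_norm)
      then show ?thesis using d2 by auto
    qed
    have der: "((\<lambda>t. f (x + t *\<^sub>R u + c *\<^sub>R v)) has_real_derivative G (x + t *\<^sub>R u + c *\<^sub>R v)) (at t)"
      if "0 \<le> t" "t \<le> s" "0 \<le> c" "c \<le> s" for t c
    proof -
      have fy: "(f has_derivative frechet_derivative f (at (x + t *\<^sub>R u + c *\<^sub>R v))) (at (x + t *\<^sub>R u + c *\<^sub>R v))"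
        using fd[OF inU[OF that]] frechet_derivative_works by blast
      have lin: "((\<lambda>t. x + t *\<^sub>R u + c *\<^sub>R v) has_derivative (\<lambda>h. h *\<^sub>R u)) (at t)"
        by (auto intro!: derivative_eq_intros)
      have "((\<lambda>t. f (x + t *\<^sub>R u + c *\<^sub>R v)) has_derivative
              (\<lambda>h. frechet_derivative f (at (x + t *\<^sub>R u + c *\<^sub>R v)) (h *\<^sub>R u))) (at t)"
        using has_derivative_compose[OF lin fy] by (simp add: o_def)
      moreover have "frechet_derivative f (at (x + t *\<^sub>R u + c *\<^sub>R v)) (h *\<^sub>R u) = h * G (x + t *\<^sub>R u + c *\<^sub>R v)" for h
        using linear_scale[OF has_derivative_linear[OF fy]] unfolding G_def by simp
      ultimately have "((\<lambda>t. f (x + t *\<^sub>R u + c *\<^sub>R v)) has_derivative (\<lambda>h. h * G (x + t *\<^sub>R u + c *\<^sub>R v))) (at t)"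
        by simp
      moreover have "(\<lambda>h. h * G (x + t *\<^sub>R u + c *\<^sub>R v)) = (*) (G (x + t *\<^sub>R u + c *\<^sub>R v))"
        by (rule ext) (simp add: mult.commute)
      ultimately show ?thesis unfolding has_field_derivative_def by simp
    qed
    have dphi: "(\<phi> has_real_derivative (G (x + t *\<^sub>R u + s *\<^sub>R v) - G (x + t *\<^sub>R u))) (at t)"
      if "0 \<le> t" "t \<le> s" for t
      using DERIV_diff[OF der[of t s] der[of t 0]] that s unfolding \<phi>_def by simp
    obtain \<tau> where tau: "0 < \<tau>" "\<tau> < s" "\<phi> s - \<phi> 0 = (s - 0) * (G (x + \<tau> *\<^sub>R u + s *\<^sub>R v) - G (x + \<tau> *\<^sub>R u))"
      using MVT2[of 0 s \<phi> "\<lambda>t. G (x + t *\<^sub>R u + s *\<^sub>R v) - G (x + t *\<^sub>R u)"] dphi s by auto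
    define y1 where "y1 = x + \<tau> *\<^sub>R u + s *\<^sub>R v"
    define y2 where "y2 = x + \<tau> *\<^sub>R u"
    have n1: "norm (y1 - x) \<le> 2 * s"
    proof -
      have "norm (y1 - x) \<le> norm (\<tau> *\<^sub>R u) + norm (s *\<^sub>R v)" unfolding y1_def
        by (metis add.assoc add_diff_cancel_left' norm_triangle_ineq)
      also have "\<dots> \<le> \<tau> + s" using nu nv tau s
        by (smt (verit) mult_left_le norm_scaleR)
      finally show ?thesis using tau by auto
    qed
    have n2: "norm (y2 - x) \<le> s"
    proof -
      have "\<tau> * norm u \<le> \<tau> * 1" by (rule mult_left_mono) (use nu tau in auto)
      moreover have "norm (y2 - x) = \<tau> * norm u" using tau by (simp add: y2_def)
      ultimately show ?thesis using tau by linarith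
    qed
    have e1: "\<bar>G y1 - G x - L (y1 - x)\<bar> \<le> e * norm (y1 - x)"
      using d1(2)[of y1] n1 s d_def by force
    have e2: "\<bar>G y2 - G x - L (y2 - x)\<bar> \<le> e * norm (y2 - x)"
      using d1(2)[of y2] n2 s d_def by force
    have Ls: "L (y1 - x) - L (y2 - x) = s * L v"
    proof -
      have "y1 - x = (y2 - x) + s *\<^sub>R v" unfolding y1_def y2_def by simp
      then have "L (y1 - x) = L ((y2 - x) + s *\<^sub>R v)" by (simp only:)
      also have "\<dots> = L (y2 - x) + L (s *\<^sub>R v)"
        by (rule linear_add[OF bounded_linear.linear[OF bl]])
      finally have "L (y1 - x) = L (y2 - x) + L (s *\<^sub>R v)" .
      moreover have "L (s *\<^sub>R v) = s * L v"
        using linear_scale[OF bounded_linear.linear[OF bl]] by simp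
      ultimately show ?thesis by simp
    qed
    have "\<bar>(G y1 - G y2) - s * L v\<bar> \<le> e * norm (y1 - x) + e * norm (y2 - x)"
      using e1 e2 Ls by linarith
    also have "\<dots> \<le> e * (2 * s) + e * s"
      using n1 n2 e by (intro add_mono mult_left_mono) auto
    finally have "\<bar>(G y1 - G y2) - s * L v\<bar> \<le> 3 * e * s" by simp
    then have a1: "s * \<bar>(G y1 - G y2) - s * L v\<bar> \<le> s * (3 * e * s)"
      using s by (intro mult_left_mono) auto
    have a2: "\<phi> s - \<phi> 0 = (f (x + s *\<^sub>R u + s *\<^sub>R v) - f (x + s *\<^sub>R u)) - (f (x + s *\<^sub>R v) - f x)"
      unfolding \<phi>_def by simp
    have a3: "\<phi> s - \<phi> 0 = s * (G y1 - G y2)" using tau(3) unfolding y1_def y2_def by simp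
    have "\<bar>(f (x + s *\<^sub>R u + s *\<^sub>R v) - f (x + s *\<^sub>R u)) - (f (x + s *\<^sub>R v) - f x) - s * (s * L v)\<bar> \<le> s * (3 * e * s)"
    proof -
      have "(f (x + s *\<^sub>R u + s *\<^sub>R v) - f (x + s *\<^sub>R u)) - (f (x + s *\<^sub>R v) - f x) - s * (s * L v)
            = s * ((G y1 - G y2) - s * L v)" using a2 a3 by (simp add: algebra_simps)
      then show ?thesis using a1 s by (simp add: abs_mult)
    qed
    then show "\<bar>(f (x + s *\<^sub>R u + s *\<^sub>R v) - f (x + s *\<^sub>R u)) - (f (x + s *\<^sub>R v) - f x) - s^2 * L v\<bar> \<le> 3 * e * s^2"
      by (simp add: power2_eq_square mult.assoc mult.left_commute)
  qed
  then show ?thesis using d by blast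
qed

lemma pd_swap:
  fixes f :: "real^'n::finite \<Rightarrow> real"
  assumes U: "open U" "x \<in> U" and fd: "\<And>y. y \<in> U \<Longrightarrow> f differentiable at y"
    and di: "pd i f differentiable at x" and dj: "pd j f differentiable at x"
  shows "pd i (pd j f) x = pd j (pd i f) x"
proof -
  define u where "u = (axis i 1 :: real^'n)"
  define v where "v = (axis j 1 :: real^'n)"
  have nu: "norm u \<le> 1" "norm v \<le> 1" unfolding u_def v_def by simp_all
  define A where "A = pd j (pd i f) x"
  define B where "B = pd i (pd j f) x"
  have GA: "((\<lambda>y. frechet_derivative f (at y) u) has_derivative frechet_derivative (pd i f) (at x)) (at x)"
    using frechet_derivative_works di unfolding pd_def u_def by blast
  have GB: "((\<lambda>y. frechet_derivative f (at y) v) has_derivative frechet_derivative (pd j f) (at x)) (at x)"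
    using frechet_derivative_works dj unfolding pd_def v_def by blast
  have A: "frechet_derivative (pd i f) (at x) v = A" unfolding A_def pd_def v_def ..
  have B: "frechet_derivative (pd j f) (at x) u = B" unfolding B_def pd_def u_def ..
  have "\<bar>A - B\<bar> \<le> 6 * e" if e: "e > 0" for e
  proof -
    obtain d1 where d1: "d1 > 0" "\<forall>s. 0 < s \<and> s < d1 \<longrightarrow>
     \<bar>(f (x + s *\<^sub>R u + s *\<^sub>R v) - f (x + s *\<^sub>R u)) - (f (x + s *\<^sub>R v) - f x) - s^2 * A\<bar> \<le> 3 * e * s^2"
      using mixed_aux[OF U fd nu GA e] A by auto
    obtain d2 where d2: "d2 > 0" "\<forall>s. 0 < s \<and> s < d2 \<longrightarrow>
     \<bar>(f (x + s *\<^sub>R v + s *\<^sub>R u) - f (x + s *\<^sub>R v)) - (f (x + s *\<^sub>R u) - f x) - s^2 * B\<bar> \<le> 3 * e * s^2"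
      using mixed_aux[OF U fd nu(2,1) GB e] B by auto
    define s where "s = min d1 d2 / 2"
    have s: "0 < s" "s < d1" "s < d2" using d1 d2 s_def by auto
    have eqx: "x + s *\<^sub>R v + s *\<^sub>R u = x + s *\<^sub>R u + s *\<^sub>R v" by (simp add: algebra_simps)
    have "\<bar>s^2 * A - s^2 * B\<bar> \<le> 6 * e * s^2"
      using d1(2)[rule_format, of s] d2(2)[rule_format, of s] s unfolding eqx by linarith
    then have "s^2 * \<bar>A - B\<bar> \<le> s^2 * (6 * e)"
      by (simp add: abs_mult left_diff_distrib[symmetric] mult.commute mult.left_commute)
    then show ?thesis using s by (simp add: mult_le_cancel_left)
  qed
  note * = this
  have "\<bar>A - B\<bar> \<le> 0"
  proof (rule ccontr)
    assume "\<not> \<bar>A - B\<bar> \<le> 0"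
    then have "\<bar>A - B\<bar> > 0" by simp
    then show False using *[of "\<bar>A - B\<bar> / 12"] by simp
  qed
  then show ?thesis unfolding A_def B_def by simp
qed


locale chart =
  fixes U :: "(real^'n::finite) set"
  assumes openU: "open U"
begin

abbreviation SM where "SM f \<equiv> smooth_on U f"

lemma SM_diff_on: "SM f \<Longrightarrow> f differentiable_on U"
  unfolding smooth_on_def by (metis pds.simps(1))

lemma SM_diff: "SM f \<Longrightarrow> x \<in> U \<Longrightarrow> f differentiable at x"
  using SM_diff_on differentiable_on_eq_differentiable_at[OF openU] by blast

lemma SM_pd: "SM f \<Longrightarrow> SM (pd k f)"
  unfolding smooth_on_def by (metis pds_append)

lemma SM_closure:
  assumes "\<And>f. f \<in> C \<Longrightarrow> f differentiable_on U"
    and "\<And>f k. f \<in> C \<Longrightarrow> \<exists>h\<in>C. \<forall>y\<in>U. pd k f y = h y"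
    and "f \<in> C"
  shows "SM f"
proof -
  have "\<exists>h\<in>C. \<forall>y\<in>U. pds ks f y = h y" for ks
  proof (induction ks)
    case Nil then show ?case using assms(3) by auto
  next
    case (Cons k ks)
    then obtain h where h: "h \<in> C" "\<forall>y\<in>U. pds ks f y = h y" by blast
    obtain h' where h': "h' \<in> C" "\<forall>y\<in>U. pd k h y = h' y" using assms(2)[OF h(1)] by blast
    have "\<forall>y\<in>U. pds (k # ks) f y = h' y"
      using pd_local[OF openU, of _ "pds ks f" h k] h h' by auto
    then show ?case using h' by blast
  qed
  then show ?thesis unfolding smooth_on_def
    using differentiable_on_cong_open[OF openU] assms(1) by metis
qed

lemma SM_cong: "SM f \<Longrightarrow> (\<And>y. y \<in> U \<Longrightarrow> f y = h y) \<Longrightarrow> SM h"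
  unfolding smooth_on_def
  using pds_local[OF openU, of f h] differentiable_on_cong_open[OF openU] by metis

lemma SM_const[simp, intro]: "SM (\<lambda>y. c)"
proof (rule SM_closure[where C="{\<lambda>y. c| c. True}"])
  show "f \<in> {\<lambda>y. c |c. True} \<Longrightarrow> f differentiable_on U" for f by auto
  show "f \<in> {\<lambda>y. c |c. True} \<Longrightarrow> \<exists>h\<in>{\<lambda>y. c |c. True}. \<forall>y\<in>U. pd k f y = h y" for f k
    by auto
qed auto

inductive_set SP :: "(real^'n \<Rightarrow> real) set" where
  SP0: "(\<lambda>y. 0) \<in> SP"
| SPS: "SM a \<Longrightarrow> SM b \<Longrightarrow> c \<in> SP \<Longrightarrow> (\<lambda>y. a y * b y + c y) \<in> SP"

lemma SP_add: "c \<in> SP \<Longrightarrow> e \<in> SP \<Longrightarrow> (\<lambda>y. c y + e y) \<in> SP"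
proof (induction rule: SP.induct)
  case SP0 then show ?case by simp
next
  case (SPS a b c)
  then show ?case using SP.SPS[OF SPS(1,2) SPS(4)[OF SPS(5)]] by (simp add: add.assoc)
qed

lemma SP_diff_on: "c \<in> SP \<Longrightarrow> c differentiable_on U"
proof (induction rule: SP.induct)
  case (SPS a b c)
  then show ?case using SM_diff_on[OF SPS(1)] SM_diff_on[OF SPS(2)]
    by (intro differentiable_on_add differentiable_on_mult) auto
qed simp

lemma SP_pd: "c \<in> SP \<Longrightarrow> \<exists>h\<in>SP. \<forall>y\<in>U. pd k c y = h y"
proof (induction rule: SP.induct)
  case SP0 then show ?case using SP.SP0 by auto
next
  case (SPS a b c)
  then obtain h where h: "h \<in> SP" "\<forall>y\<in>U. pd k c y = h y" by blast
  let ?h = "\<lambda>y. pd k a y * b y + (a y * pd k b y + h y)"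
  have "?h \<in> SP" using SPS SM_pd h by (intro SP.SPS) auto
  moreover have "\<forall>y\<in>U. pd k (\<lambda>y. a y * b y + c y) y = ?h y"
  proof
    fix y assume y: "y \<in> U"
    have da: "a differentiable at y" "b differentiable at y" using SPS SM_diff y by auto
    have dc: "c differentiable at y" using SPS(3) SP_diff_on differentiable_on_eq_differentiable_at[OF openU] y by blast
    show "pd k (\<lambda>y. a y * b y + c y) y = ?h y"
      using pd_add[OF differentiable_mult[OF da] dc, of k] pd_mult[OF da, of k] h y by simp
  qed
  ultimately show ?case by (intro bexI[of _ ?h]) auto
qed

lemma SM_SP: "c \<in> SP \<Longrightarrow> SM c"
  using SM_closure[of SP] SP_diff_on SP_pd by blast

lemma SM_mult[intro]: "SM a \<Longrightarrow> SM b \<Longrightarrow> SM (\<lambda>y. a y * b y)"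
  using SM_SP[OF SP.SPS[OF _ _ SP.SP0, of a b]] by simp

lemma SM_add[intro]: "SM a \<Longrightarrow> SM b \<Longrightarrow> SM (\<lambda>y. a y + b y)"
  using SM_SP[OF SP.SPS[OF _ _ SP.SPS[OF _ _ SP.SP0], of a "\<lambda>_. 1" b "\<lambda>_. 1"]] by simp

lemma SM_minus[intro]: "SM a \<Longrightarrow> SM (\<lambda>y. - a y)"
  using SM_mult[of "\<lambda>_. -1" a] by simp

lemma SM_sub[intro]: "SM a \<Longrightarrow> SM b \<Longrightarrow> SM (\<lambda>y. a y - b y)"
  using SM_add[OF _ SM_minus, of a b] by simp

lemma SM_sum[intro]: "(\<And>i. i \<in> S \<Longrightarrow> SM (f i)) \<Longrightarrow> SM (\<lambda>y. \<Sum>i\<in>S. f i y)"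
  by (induction S rule: infinite_finite_induct) auto

lemma SM_prod[intro]: "(\<And>i. i \<in> S \<Longrightarrow> SM (f i)) \<Longrightarrow> SM (\<lambda>y. \<Prod>i\<in>S. f i y)"
  by (induction S rule: infinite_finite_induct) auto

lemma SM_power[intro]: "SM a \<Longrightarrow> SM (\<lambda>y. a y ^ j)"
  by (induction j) auto

lemma SM_inverse:
  assumes d: "SM d" "\<And>y. y \<in> U \<Longrightarrow> d y \<noteq> 0"
  shows "SM (\<lambda>y. 1 / d y)"
proof -
  define C where "C = {f. \<exists>p j. f = (\<lambda>y. p y / d y ^ j) \<and> SM p}"
  have dd: "y \<in> U \<Longrightarrow> d differentiable at y" for y using SM_diff d by blast
  have c1: "(\<lambda>y. 1 / d y) \<in> C" unfolding C_def
    by (rule CollectI, rule exI[of _ "\<lambda>_. 1"], rule exI[of _ 1]) simp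
  have c2: "f differentiable_on U" if "f \<in> C" for f
  proof -
    obtain p j where f: "f = (\<lambda>y. p y / d y ^ j)" "SM p" using \<open>f \<in> C\<close> unfolding C_def by blast
    show ?thesis unfolding f differentiable_on_eq_differentiable_at[OF openU]
    proof
      fix y assume y: "y \<in> U"
      show "(\<lambda>y. p y / d y ^ j) differentiable at y"
        by (rule differentiable_divide[OF SM_diff[OF f(2) y] differentiable_power[OF dd[OF y]]])
           (simp add: d(2)[OF y])
    qed
  qed
  have c3: "\<exists>h\<in>C. \<forall>y\<in>U. pd k f y = h y" if "f \<in> C" for f k
  proof -
    obtain p j where f: "f = (\<lambda>y. p y / d y ^ j)" "SM p" using \<open>f \<in> C\<close> unfolding C_def by blast
    define q where "q = (\<lambda>y. pd k p y * d y ^ j - p y * (of_nat j * pd k d y * d y ^ (j - 1)))"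
    have pw: "SM (\<lambda>y. d y ^ (j - 1))" "SM (\<lambda>y. d y ^ j)" by (rule SM_power[OF d(1)])+
    have s1: "SM (\<lambda>y. pd k p y * d y ^ j)" by (rule SM_mult[OF SM_pd[OF f(2)] pw(2)])
    have s2: "SM (\<lambda>y. of_nat j * pd k d y)" by (rule SM_mult[OF SM_const SM_pd[OF d(1)]])
    have s3: "SM (\<lambda>y. of_nat j * pd k d y * d y ^ (j - 1))" by (rule SM_mult[OF s2 pw(1)])
    have s4: "SM (\<lambda>y. p y * (of_nat j * pd k d y * d y ^ (j - 1)))" by (rule SM_mult[OF f(2) s3])
    have sq: "SM q" unfolding q_def by (rule SM_sub[OF s1 s4])
    have eq: "pd k f y = q y / d y ^ (2 * j)" if y: "y \<in> U" for y
    proof -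
      have "(f has_derivative (\<lambda>h. (frechet_derivative p (at y) h * d y ^ j
               - p y * (of_nat j * frechet_derivative d (at y) h * d y ^ (j - 1))) / (d y ^ j * d y ^ j))) (at y)"
        unfolding f
        by (rule has_derivative_divide'[OF pd_works[OF SM_diff[OF f(2) y]] has_derivative_power[OF pd_works[OF dd[OF y]]]])
           (simp add: d(2)[OF y])
      from pd_eq[OF this, of k] have "pd k f y = (pd k p y * d y ^ j - p y * (of_nat j * pd k d y * d y ^ (j - 1))) / (d y ^ j * d y ^ j)"
        unfolding pd_def .
      also have "d y ^ j * d y ^ j = d y ^ (2 * j)" by (simp only: mult_2 power_add)
      finally show ?thesis unfolding q_def .
    qed
    have "(\<lambda>y. q y / d y ^ (2 * j)) \<in> C" unfolding C_def
      by (rule CollectI, rule exI[of _ q], rule exI[of _ "2*j"]) (simp add: sq)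
    then show ?thesis by (rule bexI[rotated]) (use eq in blast)
  qed
  show ?thesis by (rule SM_closure[of C, OF c2 c3 c1])
qed

end


lemma dsum1[simp]: "(\<Sum>m\<in>UNIV. (if i = m then 1 else 0) * (h m::real)) = h (i::'n::finite)"
proof -
  have "(\<Sum>m\<in>UNIV. (if i = m then 1 else 0) * h m) = (\<Sum>m\<in>UNIV. if i = m then h m else 0)"
    by (rule sum.cong) auto
  also have "\<dots> = h i" by (rule trans[OF sum.delta']) simp_all
  finally show ?thesis .
qed
lemma dsum2[simp]: "(\<Sum>m\<in>UNIV. (if m = i then 1 else 0) * (h m::real)) = h (i::'n::finite)"
proof -
  have "(\<Sum>m\<in>UNIV. (if m = i then 1 else 0) * h m) = (\<Sum>m\<in>UNIV. if i = m then h m else 0)"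
    by (rule sum.cong) auto
  also have "\<dots> = h i" by (rule trans[OF sum.delta']) simp_all
  finally show ?thesis .
qed
lemma dsum3[simp]: "(\<Sum>m\<in>UNIV. (h m::real) * (if i = m then 1 else 0)) = h (i::'n::finite)"
  using dsum1[of i h] by (simp only: mult.commute)
lemma dsum4[simp]: "(\<Sum>m\<in>UNIV. (h m::real) * (if m = i then 1 else 0)) = h (i::'n::finite)"
  using dsum2[of i h] by (simp only: mult.commute)

context chart begin
lemma SM_det:
  assumes "\<And>a c. SM (\<lambda>y. M y $ a $ c)"
  shows "SM (\<lambda>y. det (M y))"
  unfolding det_def
  by (rule SM_sum, rule SM_mult[OF SM_const], rule SM_prod, rule assms)
end

locale metric = chart U for U :: "(real^'n::finite) set" +
  fixes g :: "'n \<Rightarrow> 'n \<Rightarrow> real^'n \<Rightarrow> real"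
  assumes met: "is_metric U g"
begin

lemma g_SM[intro]: "SM (g i j)" using met unfolding is_metric_def by auto
lemma g_sym: "x \<in> U \<Longrightarrow> g i j x = g j i x" using met unfolding is_metric_def by auto
lemma g_diff: "x \<in> U \<Longrightarrow> g i j differentiable at x" using SM_diff g_SM by blast

lemma inv_gmat: assumes x: "x \<in> U" shows "invertible (gmat g x)"
proof -
  have pos: "\<And>v. v \<noteq> 0 \<Longrightarrow> v \<bullet> (gmat g x *v v) > 0" using met x unfolding is_metric_def by auto
  have lin: "linear ((*v) (gmat g x))" by (simp add: matrix_vector_mul_linear)
  have "inj ((*v) (gmat g x))"
    unfolding linear_injective_0[OF lin]
  proof (intro allI impI)
    fix v assume "gmat g x *v v = 0"
    then show "v = 0" using pos[of v] by (metis inner_zero_right less_irrefl)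
  qed
  then have "det (matrix ((*v) (gmat g x))) \<noteq> 0" using det_nz_iff_inj[OF lin] by blast
  then show ?thesis by (simp add: invertible_det_nz)
qed

lemma det_nz: "x \<in> U \<Longrightarrow> det (gmat g x) \<noteq> 0"
  using inv_gmat invertible_det_nz by blast

lemma matrix_inv_props: "x \<in> U \<Longrightarrow> gmat g x ** matrix_inv (gmat g x) = mat 1 \<and> matrix_inv (gmat g x) ** gmat g x = mat 1"
  unfolding matrix_inv_def using inv_gmat[unfolded invertible_def] by (rule someI_ex)

lemma ginv_g: "x \<in> U \<Longrightarrow> (\<Sum>l\<in>UNIV. ginv g i l x * g l j x) = (if i = j then 1 else 0)"
  using matrix_inv_props[of x] unfolding ginv_def
  by (simp add: vec_eq_iff matrix_matrix_mult_def mat_def gmat_def)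

lemma g_ginv: "x \<in> U \<Longrightarrow> (\<Sum>l\<in>UNIV. g i l x * ginv g l j x) = (if i = j then 1 else 0)"
  using matrix_inv_props[of x] unfolding ginv_def
  by (simp add: vec_eq_iff matrix_matrix_mult_def mat_def gmat_def)

lemma ginv_sym: assumes x: "x \<in> U" shows "ginv g i j x = ginv g j i x"
proof -
  have A: "(\<Sum>m\<in>UNIV. g l m x * ginv g j m x) = (if j = l then 1 else 0)" for l
    using ginv_g[OF x, of j l] g_sym[OF x] by (simp add: mult.commute)
  have "ginv g i j x = (\<Sum>l\<in>UNIV. ginv g i l x * (if j = l then 1 else 0))"
    by (simp add: if_distrib cong: if_cong)
  also have "\<dots> = (\<Sum>l\<in>UNIV. ginv g i l x * (\<Sum>m\<in>UNIV. g l m x * ginv g j m x))"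
    using A by simp
  also have "\<dots> = (\<Sum>m\<in>UNIV. (\<Sum>l\<in>UNIV. ginv g i l x * g l m x) * ginv g j m x)"
    unfolding sum_distrib_left sum_distrib_right mult.assoc by (rule sum.swap)
  also have "\<dots> = (\<Sum>m\<in>UNIV. (if i = m then 1 else 0) * ginv g j m x)" by (simp add: ginv_g[OF x])
  also have "\<dots> = ginv g j i x" by (rule dsum1)
  finally show ?thesis .
qed

lemma ginv_cramer: assumes x: "x \<in> U"
  shows "ginv g i j x = det (\<chi> a c. if c = i then (if a = j then 1 else 0) else g a c x) / det (gmat g x)"
proof -
  define b where "b = (\<chi> a. if a = j then 1 else (0::real))"
  let ?A = "gmat g x"
  have "?A *v (matrix_inv ?A *v b) = b"
    using matrix_inv_props[OF x] by (simp add: matrix_vector_mul_assoc)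
  then have "matrix_inv ?A *v b = (\<chi> k. det(\<chi> a c. if c = k then b$a else ?A$a$c) / det ?A)"
    using cramer[OF det_nz[OF x]] by blast
  then have 2: "(matrix_inv ?A *v b) $ i = det(\<chi> a c. if c = i then b$a else ?A$a$c) / det ?A"
    by simp
  have 1: "ginv g i j x = (matrix_inv ?A *v b) $ i"
    unfolding ginv_def matrix_vector_mult_def b_def by (simp add: if_distrib cong: if_cong)
  have 3: "(\<chi> a c. if c = i then b$a else ?A$a$c) = (\<chi> a c. if c = i then (if a = j then 1 else 0) else g a c x)"
    by (rule arg_cong[where f=vec_lambda], rule ext, rule arg_cong[where f=vec_lambda], rule ext) (simp add: gmat_def b_def)
  show ?thesis using 1 2 3 by simp
qed

lemma SM_if: "SM f \<Longrightarrow> SM h \<Longrightarrow> SM (\<lambda>y. if P then f y else h y)"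
  by (cases P) auto

lemma ginv_SM[intro]: "SM (ginv g i j)"
proof -
  have d1: "SM (\<lambda>y. det (gmat g y))" by (rule SM_det) (simp add: gmat_def g_SM)
  have d2: "SM (\<lambda>y. det (\<chi> a c. if c = i then (if a = j then 1 else 0) else g a c y))"
    by (rule SM_det) (unfold vec_lambda_beta, intro SM_if SM_const g_SM)
  have "SM (\<lambda>y. det (\<chi> a c. if c = i then (if a = j then 1 else 0) else g a c y) * (1 / det (gmat g y)))"
    by (rule SM_mult[OF d2 SM_inverse[OF d1 det_nz]])
  then show ?thesis by (rule SM_cong) (simp add: ginv_cramer)
qed

lemma ginv_diff: "x \<in> U \<Longrightarrow> ginv g i j differentiable at x" using SM_diff ginv_SM by blast

end


lemma contr_swap: "(\<Sum>k\<in>A. a k * (\<Sum>m\<in>B. b k m * c m)) = (\<Sum>m\<in>B. (\<Sum>k\<in>A. a k * b k m) * (c m::real))"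
proof -
  have "(\<Sum>k\<in>A. a k * (\<Sum>m\<in>B. b k m * c m)) = (\<Sum>k\<in>A. \<Sum>m\<in>B. a k * b k m * c m)"
    by (simp add: sum_distrib_left mult.assoc)
  also have "\<dots> = (\<Sum>m\<in>B. \<Sum>k\<in>A. a k * b k m * c m)" by (rule sum.swap)
  also have "\<dots> = (\<Sum>m\<in>B. (\<Sum>k\<in>A. a k * b k m) * c m)" by (simp add: sum_distrib_right)
  finally show ?thesis .
qed

context metric begin

lemma pd_g_sym: "x \<in> U \<Longrightarrow> pd k (g j i) x = pd k (g i j) x"
  by (rule pd_local[OF openU]) (auto simp: g_sym)

lemma chr_sym: assumes x: "x \<in> U" shows "chr g k i j x = chr g k j i x"
  unfolding chr_def using pd_g_sym[OF x] by (simp add: add.commute)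

lemma chr_SM[intro]: "SM (chr g k i j)"
  unfolding chr_def
  by (rule SM_mult[OF SM_const], rule SM_sum, rule SM_mult[OF ginv_SM],
      rule SM_sub[OF SM_add], (rule SM_pd[OF g_SM])+)

lemma chr_diff: "x \<in> U \<Longrightarrow> chr g k i j differentiable at x" using SM_diff chr_SM by blast

lemma low: assumes x: "x \<in> U"
  shows "(\<Sum>k\<in>UNIV. g l k x * chr g k i j x) = 1/2 * (pd i (g j l) x + pd j (g i l) x - pd l (g i j) x)"
proof -
  have "(\<Sum>k\<in>UNIV. g l k x * chr g k i j x)
     = 1/2 * (\<Sum>k\<in>UNIV. g l k x * (\<Sum>m\<in>UNIV. ginv g k m x * (pd i (g j m) x + pd j (g i m) x - pd m (g i j) x)))"
    unfolding chr_def by (simp add: sum_distrib_left mult.left_commute)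
  also have "\<dots> = 1/2 * (\<Sum>m\<in>UNIV. (\<Sum>k\<in>UNIV. g l k x * ginv g k m x) * (pd i (g j m) x + pd j (g i m) x - pd m (g i j) x))"
    by (simp only: contr_swap)
  also have "\<dots> = 1/2 * (pd i (g j l) x + pd j (g i l) x - pd l (g i j) x)"
    by (simp only: g_ginv[OF x] dsum1)
  finally show ?thesis .
qed

lemma compat: assumes x: "x \<in> U"
  shows "pd k (g i j) x = (\<Sum>m\<in>UNIV. chr g m k i x * g m j x + chr g m k j x * g i m x)"
proof -
  have "(\<Sum>m\<in>UNIV. chr g m k i x * g m j x + chr g m k j x * g i m x)
      = (\<Sum>m\<in>UNIV. g j m x * chr g m k i x) + (\<Sum>m\<in>UNIV. g i m x * chr g m k j x)"
    by (simp add: sum.distrib g_sym[OF x, of _ j] mult.commute)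
  also have "\<dots> = pd k (g i j) x"
    unfolding low[OF x] using pd_g_sym[OF x, of k i j] pd_g_sym[OF x, of j i k] pd_g_sym[OF x, of i j k]
    by (simp add: algebra_simps)
  finally show ?thesis by simp
qed

lemma pd_ginv: assumes x: "x \<in> U"
  shows "pd k (ginv g a b) x = - (\<Sum>m\<in>UNIV. chr g a k m x * ginv g m b x + chr g b k m x * ginv g a m x)"
proof -
  have z: "(\<Sum>l\<in>UNIV. pd k (ginv g a l) x * g l c x + ginv g a l x * pd k (g l c) x) = 0" for c
  proof -
    have "pd k (\<lambda>y. \<Sum>l\<in>UNIV. ginv g a l y * g l c y) x = pd k (\<lambda>y. if a = c then 1 else 0) x"
      by (rule pd_local[OF openU x]) (simp add: ginv_g)
    also have "\<dots> = 0" by simp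
    finally show ?thesis
      using x by (simp add: pd_sum pd_mult ginv_diff g_diff)
  qed
  have "pd k (ginv g a b) x = (\<Sum>l\<in>UNIV. pd k (ginv g a l) x * (\<Sum>c\<in>UNIV. g l c x * ginv g c b x))"
    by (simp add: g_ginv[OF x])
  also have "\<dots> = (\<Sum>c\<in>UNIV. (\<Sum>l\<in>UNIV. pd k (ginv g a l) x * g l c x) * ginv g c b x)"
    by (rule contr_swap)
  also have "\<dots> = (\<Sum>c\<in>UNIV. (- (\<Sum>l\<in>UNIV. ginv g a l x * pd k (g l c) x)) * ginv g c b x)"
  proof (rule sum.cong[OF refl])
    fix c
    have "(\<Sum>l\<in>UNIV. pd k (ginv g a l) x * g l c x) = - (\<Sum>l\<in>UNIV. ginv g a l x * pd k (g l c) x)"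
      using z[of c] unfolding sum.distrib by linarith
    then show "(\<Sum>l\<in>UNIV. pd k (ginv g a l) x * g l c x) * ginv g c b x = (- (\<Sum>l\<in>UNIV. ginv g a l x * pd k (g l c) x)) * ginv g c b x"
      by simp
  qed
  also have "\<dots> = - (\<Sum>c\<in>UNIV. (\<Sum>l\<in>UNIV. ginv g a l x * pd k (g l c) x) * ginv g c b x)"
    by (simp add: sum_negf)
  also have "(\<Sum>c\<in>UNIV. (\<Sum>l\<in>UNIV. ginv g a l x * pd k (g l c) x) * ginv g c b x)
     = (\<Sum>c\<in>UNIV. (\<Sum>l\<in>UNIV. ginv g a l x * (\<Sum>m\<in>UNIV. chr g m k l x * g m c x)) * ginv g c b x)
     + (\<Sum>c\<in>UNIV. (\<Sum>l\<in>UNIV. ginv g a l x * (\<Sum>m\<in>UNIV. chr g m k c x * g l m x)) * ginv g c b x)"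
    by (simp add: compat[OF x] sum.distrib distrib_left distrib_right)
  also have "(\<Sum>c\<in>UNIV. (\<Sum>l\<in>UNIV. ginv g a l x * (\<Sum>m\<in>UNIV. chr g m k l x * g m c x)) * ginv g c b x)
     = (\<Sum>m\<in>UNIV. chr g b k m x * ginv g a m x)"
  proof -
    have "(\<Sum>c\<in>UNIV. (\<Sum>l\<in>UNIV. ginv g a l x * (\<Sum>m\<in>UNIV. chr g m k l x * g m c x)) * ginv g c b x)
       = (\<Sum>l\<in>UNIV. ginv g a l x * (\<Sum>m\<in>UNIV. chr g m k l x * (\<Sum>c\<in>UNIV. g m c x * ginv g c b x)))"
    proof -
      have "(\<Sum>c\<in>UNIV. (\<Sum>l\<in>UNIV. ginv g a l x * (\<Sum>m\<in>UNIV. chr g m k l x * g m c x)) * ginv g c b x)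
         = (\<Sum>c\<in>UNIV. \<Sum>l\<in>UNIV. ginv g a l x * (\<Sum>m\<in>UNIV. chr g m k l x * g m c x) * ginv g c b x)"
        by (simp add: sum_distrib_right)
      also have "\<dots> = (\<Sum>l\<in>UNIV. \<Sum>c\<in>UNIV. ginv g a l x * (\<Sum>m\<in>UNIV. chr g m k l x * g m c x) * ginv g c b x)"
        by (rule sum.swap)
      also have "\<dots> = (\<Sum>l\<in>UNIV. ginv g a l x * (\<Sum>c\<in>UNIV. (\<Sum>m\<in>UNIV. chr g m k l x * g m c x) * ginv g c b x))"
        by (simp only: mult.assoc sum_distrib_left[symmetric])
      also have "\<dots> = (\<Sum>l\<in>UNIV. ginv g a l x * (\<Sum>m\<in>UNIV. chr g m k l x * (\<Sum>c\<in>UNIV. g m c x * ginv g c b x)))"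
        by (simp add: contr_swap[symmetric])
      finally show ?thesis .
    qed
    also have "\<dots> = (\<Sum>l\<in>UNIV. ginv g a l x * chr g b k l x)"
      by (simp add: g_ginv[OF x])
    finally show ?thesis by (simp add: mult.commute)
  qed
  also have "(\<Sum>c\<in>UNIV. (\<Sum>l\<in>UNIV. ginv g a l x * (\<Sum>m\<in>UNIV. chr g m k c x * g l m x)) * ginv g c b x)
     = (\<Sum>m\<in>UNIV. chr g a k m x * ginv g m b x)"
  proof -
    have "(\<Sum>l\<in>UNIV. ginv g a l x * (\<Sum>m\<in>UNIV. chr g m k c x * g l m x)) = chr g a k c x" for c
    proof -
      have "(\<Sum>l\<in>UNIV. ginv g a l x * (\<Sum>m\<in>UNIV. chr g m k c x * g l m x)) = (\<Sum>l\<in>UNIV. ginv g a l x * (\<Sum>m\<in>UNIV. g l m x * chr g m k c x))"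
        by (simp only: mult.commute[of "chr g _ k c x"])
      also have "\<dots> = (\<Sum>m\<in>UNIV. (\<Sum>l\<in>UNIV. ginv g a l x * g l m x) * chr g m k c x)"
        by (rule contr_swap)
      also have "\<dots> = chr g a k c x" by (simp only: ginv_g[OF x] dsum1)
      finally show ?thesis .
    qed
    then show ?thesis by simp
  qed
  finally show ?thesis by (simp add: sum.distrib add.commute)
qed

end


lemma dswap: "(\<Sum>e\<in>A. (\<Sum>m\<in>B. a e m * b m) * w e) = (\<Sum>m\<in>B. b m * (\<Sum>e\<in>A. a e m * (w e::real)))"
proof -
  have "(\<Sum>e\<in>A. (\<Sum>m\<in>B. a e m * b m) * w e) = (\<Sum>e\<in>A. \<Sum>m\<in>B. a e m * b m * w e)"
    by (simp add: sum_distrib_right)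
  also have "\<dots> = (\<Sum>m\<in>B. \<Sum>e\<in>A. a e m * b m * w e)" by (rule sum.swap)
  also have "\<dots> = (\<Sum>m\<in>B. b m * (\<Sum>e\<in>A. a e m * w e))"
    by (simp add: sum_distrib_left mult_ac)
  finally show ?thesis .
qed

lemma ricci1_alg:
  fixes G ddw :: "'n::finite \<Rightarrow> 'n \<Rightarrow> 'n \<Rightarrow> real" and dG' :: "'n \<Rightarrow> 'n \<Rightarrow> 'n \<Rightarrow> 'n \<Rightarrow> real"
    and dw :: "'n \<Rightarrow> 'n \<Rightarrow> real" and w :: "'n \<Rightarrow> real"
  assumes Gs: "\<And>m i j. G m i j = G m j i" and dds: "ddw a b c = ddw b a c"
  shows "(ddw a b c - (\<Sum>m\<in>UNIV. dG' a m b c * w m + G m b c * dw a m)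
      - (\<Sum>m\<in>UNIV. G m a b * (dw m c - (\<Sum>p\<in>UNIV. G p m c * w p)) + G m a c * (dw b m - (\<Sum>p\<in>UNIV. G p b m * w p)))) - (ddw b a c - (\<Sum>m\<in>UNIV. dG' b m a c * w m + G m a c * dw b m)
      - (\<Sum>m\<in>UNIV. G m b a * (dw m c - (\<Sum>p\<in>UNIV. G p m c * w p)) + G m b c * (dw a m - (\<Sum>p\<in>UNIV. G p a m * w p)))) = - (\<Sum>e\<in>UNIV. (dG' a e b c - dG' b e a c
             + (\<Sum>m\<in>UNIV. G e a m * G m b c - G e b m * G m a c)) * w e)"
proof -
  have s1: "(\<Sum>e\<in>UNIV. (\<Sum>m\<in>UNIV. G e a m * G m b c) * w e) = (\<Sum>m\<in>UNIV. G m b c * (\<Sum>p\<in>UNIV. G p a m * w p))"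
    by (rule dswap)
  have s2: "(\<Sum>e\<in>UNIV. (\<Sum>m\<in>UNIV. G e b m * G m a c) * w e) = (\<Sum>m\<in>UNIV. G m a c * (\<Sum>p\<in>UNIV. G p b m * w p))"
    by (rule dswap)
  have "- (\<Sum>e\<in>UNIV. (dG' a e b c - dG' b e a c + (\<Sum>m\<in>UNIV. G e a m * G m b c - G e b m * G m a c)) * w e)
      = - (\<Sum>e\<in>UNIV. dG' a e b c * w e) + (\<Sum>e\<in>UNIV. dG' b e a c * w e)
        - (\<Sum>e\<in>UNIV. (\<Sum>m\<in>UNIV. G e a m * G m b c) * w e) + (\<Sum>e\<in>UNIV. (\<Sum>m\<in>UNIV. G e b m * G m a c) * w e)"
    by (simp add: algebra_simps sum.distrib sum_subtractf)
  also have "\<dots> = - (\<Sum>e\<in>UNIV. dG' a e b c * w e) + (\<Sum>e\<in>UNIV. dG' b e a c * w e)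
        - (\<Sum>m\<in>UNIV. G m b c * (\<Sum>p\<in>UNIV. G p a m * w p)) + (\<Sum>m\<in>UNIV. G m a c * (\<Sum>p\<in>UNIV. G p b m * w p))"
    by (simp only: s1 s2)
  also have "\<dots> = (ddw a b c - (\<Sum>m\<in>UNIV. dG' a m b c * w m + G m b c * dw a m)
      - (\<Sum>m\<in>UNIV. G m a b * (dw m c - (\<Sum>p\<in>UNIV. G p m c * w p)) + G m a c * (dw b m - (\<Sum>p\<in>UNIV. G p b m * w p)))) - (ddw b a c - (\<Sum>m\<in>UNIV. dG' b m a c * w m + G m a c * dw b m)
      - (\<Sum>m\<in>UNIV. G m b a * (dw m c - (\<Sum>p\<in>UNIV. G p m c * w p)) + G m b c * (dw a m - (\<Sum>p\<in>UNIV. G p a m * w p))))"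
    using dds Gs[of _ a b]
    by (simp add: algebra_simps sum.distrib sum_subtractf)
  finally show ?thesis by simp
qed

lemma dswap2: "(\<Sum>e\<in>A. (\<Sum>m\<in>B. a e m * b m) * w e) = (\<Sum>m\<in>B. b m * (\<Sum>e\<in>A. a e m * (w e::real)))"
  by (rule dswap)

lemma cross_swap: "(\<Sum>m\<in>A. a m * (\<Sum>p\<in>B. b p * S p m)) = (\<Sum>m\<in>B. b m * (\<Sum>p\<in>A. a p * (S m p::real)))"
proof -
  have "(\<Sum>m\<in>A. a m * (\<Sum>p\<in>B. b p * S p m)) = (\<Sum>m\<in>A. \<Sum>p\<in>B. b p * (a m * S p m))"
    by (simp add: sum_distrib_left mult_ac)
  also have "\<dots> = (\<Sum>p\<in>B. \<Sum>m\<in>A. b p * (a m * S p m))" by (rule sum.swap)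
  also have "\<dots> = (\<Sum>m\<in>B. b m * (\<Sum>p\<in>A. a p * S m p))" by (simp add: sum_distrib_left)
  finally show ?thesis .
qed

lemma ricci2_alg:
  fixes G dS :: "'n::finite \<Rightarrow> 'n \<Rightarrow> 'n \<Rightarrow> real" and dG' dd :: "'n \<Rightarrow> 'n \<Rightarrow> 'n \<Rightarrow> 'n \<Rightarrow> real"
    and S :: "'n \<Rightarrow> 'n \<Rightarrow> real"
  assumes Gs: "\<And>m i j. G m i j = G m j i" and dds: "dd a b c d = dd b a c d"
  shows "(dd a b c d - (\<Sum>m\<in>UNIV. dG' a m b c * S m d + G m b c * dS a m d + (dG' a m b d * S c m + G m b d * dS a c m))
      - (\<Sum>m\<in>UNIV. G m a b * (dS m c d - (\<Sum>p\<in>UNIV. G p m c * S p d + G p m d * S c p))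
          + G m a c * (dS b m d - (\<Sum>p\<in>UNIV. G p b m * S p d + G p b d * S m p))
          + G m a d * (dS b c m - (\<Sum>p\<in>UNIV. G p b c * S p m + G p b m * S c p)))) - (dd b a c d - (\<Sum>m\<in>UNIV. dG' b m a c * S m d + G m a c * dS b m d + (dG' b m a d * S c m + G m a d * dS b c m))
      - (\<Sum>m\<in>UNIV. G m b a * (dS m c d - (\<Sum>p\<in>UNIV. G p m c * S p d + G p m d * S c p))
          + G m b c * (dS a m d - (\<Sum>p\<in>UNIV. G p a m * S p d + G p a d * S m p))
          + G m b d * (dS a c m - (\<Sum>p\<in>UNIV. G p a c * S p m + G p a m * S c p)))) =
   - (\<Sum>e\<in>UNIV. (dG' a e b c - dG' b e a c + (\<Sum>m\<in>UNIV. G e a m * G m b c - G e b m * G m a c)) * S e d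
      + (dG' a e b d - dG' b e a d + (\<Sum>m\<in>UNIV. G e a m * G m b d - G e b m * G m a d)) * S c e)"
proof -
  have s1: "(\<Sum>e\<in>UNIV. (\<Sum>m\<in>UNIV. G e a m * G m b c) * S e d) = (\<Sum>m\<in>UNIV. G m b c * (\<Sum>p\<in>UNIV. G p a m * S p d))"
    by (rule dswap)
  have s2: "(\<Sum>e\<in>UNIV. (\<Sum>m\<in>UNIV. G e b m * G m a c) * S e d) = (\<Sum>m\<in>UNIV. G m a c * (\<Sum>p\<in>UNIV. G p b m * S p d))"
    by (rule dswap)
  have s3: "(\<Sum>e\<in>UNIV. (\<Sum>m\<in>UNIV. G e a m * G m b d) * S c e) = (\<Sum>m\<in>UNIV. G m b d * (\<Sum>p\<in>UNIV. G p a m * S c p))"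
    by (rule dswap)
  have s4: "(\<Sum>e\<in>UNIV. (\<Sum>m\<in>UNIV. G e b m * G m a d) * S c e) = (\<Sum>m\<in>UNIV. G m a d * (\<Sum>p\<in>UNIV. G p b m * S c p))"
    by (rule dswap)
  have c1: "(\<Sum>m\<in>UNIV. G m a d * (\<Sum>p\<in>UNIV. G p b c * S p m)) = (\<Sum>m\<in>UNIV. G m b c * (\<Sum>p\<in>UNIV. G p a d * S m p))"
    by (rule cross_swap)
  have c2: "(\<Sum>m\<in>UNIV. G m b d * (\<Sum>p\<in>UNIV. G p a c * S p m)) = (\<Sum>m\<in>UNIV. G m a c * (\<Sum>p\<in>UNIV. G p b d * S m p))"
    by (rule cross_swap)
  have "- (\<Sum>e\<in>UNIV. (dG' a e b c - dG' b e a c + (\<Sum>m\<in>UNIV. G e a m * G m b c - G e b m * G m a c)) * S e d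
      + (dG' a e b d - dG' b e a d + (\<Sum>m\<in>UNIV. G e a m * G m b d - G e b m * G m a d)) * S c e)
      = - (\<Sum>e\<in>UNIV. dG' a e b c * S e d) + (\<Sum>e\<in>UNIV. dG' b e a c * S e d)
        - (\<Sum>e\<in>UNIV. (\<Sum>m\<in>UNIV. G e a m * G m b c) * S e d) + (\<Sum>e\<in>UNIV. (\<Sum>m\<in>UNIV. G e b m * G m a c) * S e d)
        - (\<Sum>e\<in>UNIV. dG' a e b d * S c e) + (\<Sum>e\<in>UNIV. dG' b e a d * S c e)
        - (\<Sum>e\<in>UNIV. (\<Sum>m\<in>UNIV. G e a m * G m b d) * S c e) + (\<Sum>e\<in>UNIV. (\<Sum>m\<in>UNIV. G e b m * G m a d) * S c e)"
    by (simp add: algebra_simps sum.distrib sum_subtractf)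
  also have "\<dots> = - (\<Sum>e\<in>UNIV. dG' a e b c * S e d) + (\<Sum>e\<in>UNIV. dG' b e a c * S e d)
        - (\<Sum>m\<in>UNIV. G m b c * (\<Sum>p\<in>UNIV. G p a m * S p d)) + (\<Sum>m\<in>UNIV. G m a c * (\<Sum>p\<in>UNIV. G p b m * S p d))
        - (\<Sum>e\<in>UNIV. dG' a e b d * S c e) + (\<Sum>e\<in>UNIV. dG' b e a d * S c e)
        - (\<Sum>m\<in>UNIV. G m b d * (\<Sum>p\<in>UNIV. G p a m * S c p)) + (\<Sum>m\<in>UNIV. G m a d * (\<Sum>p\<in>UNIV. G p b m * S c p))"
    by (simp only: s1 s2 s3 s4)
  also have "\<dots> = (dd a b c d - (\<Sum>m\<in>UNIV. dG' a m b c * S m d + G m b c * dS a m d + (dG' a m b d * S c m + G m b d * dS a c m))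
      - (\<Sum>m\<in>UNIV. G m a b * (dS m c d - (\<Sum>p\<in>UNIV. G p m c * S p d + G p m d * S c p))
          + G m a c * (dS b m d - (\<Sum>p\<in>UNIV. G p b m * S p d + G p b d * S m p))
          + G m a d * (dS b c m - (\<Sum>p\<in>UNIV. G p b c * S p m + G p b m * S c p)))) - (dd b a c d - (\<Sum>m\<in>UNIV. dG' b m a c * S m d + G m a c * dS b m d + (dG' b m a d * S c m + G m a d * dS b c m))
      - (\<Sum>m\<in>UNIV. G m b a * (dS m c d - (\<Sum>p\<in>UNIV. G p m c * S p d + G p m d * S c p))
          + G m b c * (dS a m d - (\<Sum>p\<in>UNIV. G p a m * S p d + G p a d * S m p))
          + G m b d * (dS a c m - (\<Sum>p\<in>UNIV. G p a c * S p m + G p a m * S c p))))"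
    using dds Gs[of _ a b] c1 c2
    by (simp add: algebra_simps sum.distrib sum_subtractf)
  finally show ?thesis by simp
qed

context metric begin

definition cd1 :: "('n \<Rightarrow> real^'n \<Rightarrow> real) \<Rightarrow> 'n \<Rightarrow> 'n \<Rightarrow> real^'n \<Rightarrow> real" where
  "cd1 \<omega> b c x = pd b (\<omega> c) x - (\<Sum>m\<in>UNIV. chr g m b c x * \<omega> m x)"

definition cd2 :: "('n \<Rightarrow> 'n \<Rightarrow> real^'n \<Rightarrow> real) \<Rightarrow> 'n \<Rightarrow> 'n \<Rightarrow> 'n \<Rightarrow> real^'n \<Rightarrow> real" where
  "cd2 S a b c x = pd a (S b c) x - (\<Sum>m\<in>UNIV. chr g m a b x * S m c x + chr g m a c x * S b m x)"

definition cd3 :: "('n \<Rightarrow> 'n \<Rightarrow> 'n \<Rightarrow> real^'n \<Rightarrow> real) \<Rightarrow> 'n \<Rightarrow> 'n \<Rightarrow> 'n \<Rightarrow> 'n \<Rightarrow> real^'n \<Rightarrow> real" where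
  "cd3 T a b c d x = pd a (T b c d) x - (\<Sum>m\<in>UNIV. chr g m a b x * T m c d x + chr g m a c x * T b m d x + chr g m a d x * T b c m x)"

lemma cd1_fun: "cd1 \<omega> b c = (\<lambda>x. pd b (\<omega> c) x - (\<Sum>m\<in>UNIV. chr g m b c x * \<omega> m x))"
  by (rule ext) (simp add: cd1_def)
lemma cd2_fun: "cd2 S a b c = (\<lambda>x. pd a (S b c) x - (\<Sum>m\<in>UNIV. chr g m a b x * S m c x + chr g m a c x * S b m x))"
  by (rule ext) (simp add: cd2_def)

lemma cd1_SM[intro]: "(\<And>c. SM (\<omega> c)) \<Longrightarrow> SM (cd1 \<omega> b c)"
  unfolding cd1_fun by (rule SM_sub[OF SM_pd SM_sum[OF SM_mult[OF chr_SM]]]) auto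

lemma cd2_SM[intro]: "(\<And>b c. SM (S b c)) \<Longrightarrow> SM (cd2 S a b c)"
  unfolding cd2_fun by (rule SM_sub[OF SM_pd SM_sum[OF SM_add[OF SM_mult[OF chr_SM] SM_mult[OF chr_SM]]]]) auto

lemma pd_cd1: assumes w: "\<And>c. SM (\<omega> c)" and x: "x \<in> U"
  shows "pd a (cd1 \<omega> b c) x = pd a (pd b (\<omega> c)) x
     - (\<Sum>m\<in>UNIV. pd a (chr g m b c) x * \<omega> m x + chr g m b c x * pd a (\<omega> m) x)"
proof -
  have d: "\<omega> m differentiable at x" "pd b (\<omega> m) differentiable at x" for m b
    using SM_diff[OF w x] SM_diff[OF SM_pd[OF w] x] by auto
  show ?thesis unfolding cd1_fun
    using x chr_diff d
    by (simp add: pd_diff pd_sum pd_mult differentiable_sum_fun)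
qed

lemma ricci1: assumes w: "\<And>c. SM (\<omega> c)" and x: "x \<in> U"
  shows "cd2 (cd1 \<omega>) a b c x - cd2 (cd1 \<omega>) b a c x = - (\<Sum>e\<in>UNIV. riem g a b c e x * \<omega> e x)"
proof -
  have ex: "cd2 (cd1 \<omega>) a b c x = pd a (pd b (\<omega> c)) x - (\<Sum>m\<in>UNIV. pd a (chr g m b c) x * \<omega> m x + chr g m b c x * pd a (\<omega> m) x)
      - (\<Sum>m\<in>UNIV. chr g m a b x * (pd m (\<omega> c) x - (\<Sum>p\<in>UNIV. chr g p m c x * \<omega> p x))
                 + chr g m a c x * (pd b (\<omega> m) x - (\<Sum>p\<in>UNIV. chr g p b m x * \<omega> p x)))" for a b c
    unfolding cd2_def pd_cd1[OF w x] cd1_def ..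
  have sw: "pd a (pd b (\<omega> c)) x = pd b (pd a (\<omega> c)) x"
    by (rule pd_swap[OF openU x]) (use SM_diff SM_pd w x in auto)
  show ?thesis
    unfolding ex riem_def
    by (rule ricci1_alg[where G="\<lambda>m i j. chr g m i j x" and ddw="\<lambda>a b c. pd a (pd b (\<omega> c)) x"
            and dG'="\<lambda>a m i j. pd a (chr g m i j) x" and dw="\<lambda>a m. pd a (\<omega> m) x"
            and w="\<lambda>m. \<omega> m x"])
       (use chr_sym[OF x] sw in auto)
qed

end

context metric begin

lemma pd_cd2: assumes S: "\<And>b c. SM (S b c)" and x: "x \<in> U"
  shows "pd a (cd2 S b c d) x = pd a (pd b (S c d)) x
     - (\<Sum>m\<in>UNIV. pd a (chr g m b c) x * S m d x + chr g m b c x * pd a (S m d) x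
          + (pd a (chr g m b d) x * S c m x + chr g m b d x * pd a (S c m) x))"
proof -
  have d: "S m l differentiable at x" "pd b (S m l) differentiable at x" for m b l
    using SM_diff[OF S x] SM_diff[OF SM_pd[OF S] x] by auto
  show ?thesis unfolding cd2_fun
    using x chr_diff d
    by (simp add: pd_diff pd_sum pd_mult pd_add differentiable_sum_fun)
qed

lemma ricci2: assumes S: "\<And>b c. SM (S b c)" and x: "x \<in> U"
  shows "cd3 (cd2 S) a b c d x - cd3 (cd2 S) b a c d x
     = - (\<Sum>e\<in>UNIV. riem g a b c e x * S e d x + riem g a b d e x * S c e x)"
proof -
  have ex: "cd3 (cd2 S) a b c d x = pd a (pd b (S c d)) x
     - (\<Sum>m\<in>UNIV. pd a (chr g m b c) x * S m d x + chr g m b c x * pd a (S m d) x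
          + (pd a (chr g m b d) x * S c m x + chr g m b d x * pd a (S c m) x))
      - (\<Sum>m\<in>UNIV. chr g m a b x * (pd m (S c d) x - (\<Sum>p\<in>UNIV. chr g p m c x * S p d x + chr g p m d x * S c p x))
          + chr g m a c x * (pd b (S m d) x - (\<Sum>p\<in>UNIV. chr g p b m x * S p d x + chr g p b d x * S m p x))
          + chr g m a d x * (pd b (S c m) x - (\<Sum>p\<in>UNIV. chr g p b c x * S p m x + chr g p b m x * S c p x)))" for a b c d
    unfolding cd3_def pd_cd2[OF S x] cd2_def ..
  have sw: "pd a (pd b (S c d)) x = pd b (pd a (S c d)) x"
    by (rule pd_swap[OF openU x]) (use SM_diff SM_pd S x in auto)
  show ?thesis
    unfolding ex riem_def
    by (rule ricci2_alg[where G="\<lambda>m i j. chr g m i j x" and dd="\<lambda>a b c d. pd a (pd b (S c d)) x"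
            and dG'="\<lambda>a m i j. pd a (chr g m i j) x" and dS="\<lambda>a m l. pd a (S m l) x"
            and S="\<lambda>m l. S m l x"])
       (use chr_sym[OF x] sw in auto)
qed

end


lemma dswap3: "(\<Sum>e\<in>A. (\<Sum>m\<in>B. a m * b m e) * w e) = (\<Sum>m\<in>B. a m * (\<Sum>e\<in>A. b m e * (w e::real)))"
proof -
  have "(\<Sum>e\<in>A. (\<Sum>m\<in>B. a m * b m e) * w e) = (\<Sum>e\<in>A. \<Sum>m\<in>B. a m * (b m e * w e))"
    by (simp add: sum_distrib_right mult.assoc)
  also have "\<dots> = (\<Sum>m\<in>B. \<Sum>e\<in>A. a m * (b m e * w e))" by (rule sum.swap)
  also have "\<dots> = (\<Sum>m\<in>B. a m * (\<Sum>e\<in>A. b m e * w e))" by (simp add: sum_distrib_left)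
  finally show ?thesis .
qed

lemma leibniz_alg:
  fixes G :: "'n::finite \<Rightarrow> 'n \<Rightarrow> 'n \<Rightarrow> real" and R :: "'n \<Rightarrow> 'n \<Rightarrow> 'n \<Rightarrow> 'n \<Rightarrow> real"
    and dR :: "'n \<Rightarrow> real" and dw :: "'n \<Rightarrow> real" and w :: "'n \<Rightarrow> real"
  shows "(\<Sum>e\<in>UNIV. dR e * w e + R b c d e * dw e)
     - (\<Sum>m\<in>UNIV. G m a b * (\<Sum>e\<in>UNIV. R m c d e * w e) + G m a c * (\<Sum>e\<in>UNIV. R b m d e * w e)
            + G m a d * (\<Sum>e\<in>UNIV. R b c m e * w e))
   = (\<Sum>e\<in>UNIV. (dR e - (\<Sum>m\<in>UNIV. G m a b * R m c d e + G m a c * R b m d e + G m a d * R b c m e)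
          + (\<Sum>m\<in>UNIV. G e a m * R b c d m)) * w e + R b c d e * (dw e - (\<Sum>m\<in>UNIV. G m a e * w m)))"
proof -
  have "(\<Sum>e\<in>UNIV. (dR e - (\<Sum>m\<in>UNIV. G m a b * R m c d e + G m a c * R b m d e + G m a d * R b c m e)
          + (\<Sum>m\<in>UNIV. G e a m * R b c d m)) * w e + R b c d e * (dw e - (\<Sum>m\<in>UNIV. G m a e * w m)))
     = (\<Sum>e\<in>UNIV. dR e * w e) - (\<Sum>e\<in>UNIV. (\<Sum>m\<in>UNIV. G m a b * R m c d e) * w e)
        - (\<Sum>e\<in>UNIV. (\<Sum>m\<in>UNIV. G m a c * R b m d e) * w e) - (\<Sum>e\<in>UNIV. (\<Sum>m\<in>UNIV. G m a d * R b c m e) * w e)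
        + (\<Sum>e\<in>UNIV. (\<Sum>m\<in>UNIV. G e a m * R b c d m) * w e)
        + (\<Sum>e\<in>UNIV. R b c d e * dw e) - (\<Sum>e\<in>UNIV. R b c d e * (\<Sum>m\<in>UNIV. G m a e * w m))"
    by (simp add: algebra_simps sum.distrib sum_subtractf)
  also have "\<dots> = (\<Sum>e\<in>UNIV. dR e * w e) - (\<Sum>m\<in>UNIV. G m a b * (\<Sum>e\<in>UNIV. R m c d e * w e))
        - (\<Sum>m\<in>UNIV. G m a c * (\<Sum>e\<in>UNIV. R b m d e * w e)) - (\<Sum>m\<in>UNIV. G m a d * (\<Sum>e\<in>UNIV. R b c m e * w e))
        + (\<Sum>m\<in>UNIV. R b c d m * (\<Sum>e\<in>UNIV. G e a m * w e))
        + (\<Sum>e\<in>UNIV. R b c d e * dw e) - (\<Sum>e\<in>UNIV. R b c d e * (\<Sum>m\<in>UNIV. G m a e * w m))"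
    by (simp only: dswap3 dswap)
  also have "\<dots> = (\<Sum>e\<in>UNIV. dR e * w e + R b c d e * dw e)
     - (\<Sum>m\<in>UNIV. G m a b * (\<Sum>e\<in>UNIV. R m c d e * w e) + G m a c * (\<Sum>e\<in>UNIV. R b m d e * w e)
            + G m a d * (\<Sum>e\<in>UNIV. R b c m e * w e))"
    by (simp add: sum.distrib)
  finally show ?thesis by simp
qed

context metric begin

lemma riem_fun: "riem g i j k l = (\<lambda>x. pd i (chr g l j k) x - pd j (chr g l i k) x
     + (\<Sum>m\<in>UNIV. chr g l i m x * chr g m j k x - chr g l j m x * chr g m i k x))"
  by (rule ext) (simp add: riem_def)

lemma riem_SM[intro]: "SM (riem g i j k l)"
  unfolding riem_fun
  by (rule SM_add[OF SM_sub[OF SM_pd SM_pd] SM_sum[OF SM_sub[OF SM_mult SM_mult]]]) auto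

lemma riem_diff: "x \<in> U \<Longrightarrow> riem g i j k l differentiable at x" using SM_diff riem_SM by blast

lemma bianchi1: assumes x: "x \<in> U"
  shows "riem g a b c e x + riem g b c a e x + riem g c a b e x = 0"
proof -
  have p: "pd k (chr g e i j) x = pd k (chr g e j i) x" for k i j
    by (rule pd_local[OF openU x]) (simp add: chr_sym)
  show ?thesis unfolding riem_def
    using p[of a b c] p[of b c a] p[of c a b] chr_sym[OF x]
    by (simp add: algebra_simps sum.distrib sum_subtractf)
qed

definition driem :: "'n \<Rightarrow> 'n \<Rightarrow> 'n \<Rightarrow> 'n \<Rightarrow> 'n \<Rightarrow> real^'n \<Rightarrow> real" where
  "driem a b c d e x = pd a (riem g b c d e) x
     - (\<Sum>m\<in>UNIV. chr g m a b x * riem g m c d e x + chr g m a c x * riem g b m d e x + chr g m a d x * riem g b c m e x)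
     + (\<Sum>m\<in>UNIV. chr g e a m x * riem g b c d m x)"

lemma leibniz_riem: assumes w: "\<And>c. SM (\<omega> c)" and x: "x \<in> U"
  shows "cd3 (\<lambda>b c d y. \<Sum>e\<in>UNIV. riem g b c d e y * \<omega> e y) a b c d x
     = (\<Sum>e\<in>UNIV. driem a b c d e x * \<omega> e x + riem g b c d e x * cd1 \<omega> a e x)"
proof -
  have dw: "\<omega> m differentiable at x" for m using SM_diff[OF w x] .
  have "pd a (\<lambda>y. \<Sum>e\<in>UNIV. riem g b c d e y * \<omega> e y) x
      = (\<Sum>e\<in>UNIV. pd a (riem g b c d e) x * \<omega> e x + riem g b c d e x * pd a (\<omega> e) x)"
    using x dw riem_diff by (simp add: pd_sum pd_mult)
  then show ?thesis unfolding cd3_def driem_def cd1_def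
    using leibniz_alg[where G="\<lambda>m i j. chr g m i j x" and R="\<lambda>b c d e. riem g b c d e x"
        and dR="\<lambda>e. pd a (riem g b c d e) x" and dw="\<lambda>e. pd a (\<omega> e) x" and w="\<lambda>e. \<omega> e x"]
    by simp
qed

end

context metric begin

lemma bianchi2_gen: assumes w: "\<And>c. SM (\<omega> c)" and x: "x \<in> U"
  shows "(\<Sum>e\<in>UNIV. driem a b c d e x * \<omega> e x) + (\<Sum>e\<in>UNIV. driem b c a d e x * \<omega> e x)
       + (\<Sum>e\<in>UNIV. driem c a b d e x * \<omega> e x) = 0"
proof -
  define S where "S = cd1 \<omega>"
  define T where "T = cd2 S"
  define K where "K = cd3 T"
  define Q where "Q = (\<lambda>b c d y. \<Sum>e\<in>UNIV. riem g b c d e y * \<omega> e y)"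
  have S_SM: "SM (S b c)" for b c unfolding S_def using w by auto
  have T_SM: "SM (T b c d)" for b c d unfolding T_def using S_SM by auto
  have rQ: "T q r d y - T r q d y = - Q q r d y" if "y \<in> U" for q r d y
    unfolding T_def S_def Q_def using ricci1[OF w that] .
  have Ki: "K p q r d x - K q p r d x = - (\<Sum>e\<in>UNIV. riem g p q r e x * S e d x) - (\<Sum>e\<in>UNIV. riem g p q d e x * S r e x)"
    for p q r
    unfolding K_def T_def using ricci2[OF S_SM x, where a=p and b=q and c=r and d=d] by (simp add: sum.distrib)
  have Kii: "K p q r d x - K p r q d x = - (\<Sum>e\<in>UNIV. driem p q r d e x * \<omega> e x) - (\<Sum>e\<in>UNIV. riem g q r d e x * S p e x)"
    for p q r
  proof -
    have dT: "T q r d differentiable at x" for q r d using SM_diff[OF T_SM x] .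
    have "pd p (T q r d) x - pd p (T r q d) x = pd p (\<lambda>y. T q r d y - T r q d y) x"
      using pd_diff[OF dT dT] by simp
    also have "\<dots> = pd p (\<lambda>y. (-1) * Q q r d y) x"
      by (rule pd_local[OF openU x]) (simp add: rQ)
    also have "\<dots> = - pd p (Q q r d) x"
    proof -
      have "Q q r d differentiable at x" unfolding Q_def
        using x riem_diff SM_diff[OF w x] by (auto intro!: differentiable_sum_fun)
      then show ?thesis using pd_cmult[of "Q q r d" x p "-1"] by simp
    qed
    finally have pp: "pd p (T q r d) x - pd p (T r q d) x = - pd p (Q q r d) x" .
    have "K p q r d x - K p r q d x = (pd p (T q r d) x - pd p (T r q d) x)
        - (\<Sum>m\<in>UNIV. chr g m p q x * (T m r d x - T r m d x) + chr g m p r x * (T q m d x - T m q d x)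
              + chr g m p d x * (T q r m x - T r q m x))"
      unfolding K_def cd3_def by (simp add: algebra_simps sum.distrib sum_subtractf)
    also have "\<dots> = - cd3 Q p q r d x"
      unfolding pp rQ[OF x] cd3_def by (simp add: algebra_simps sum.distrib sum_subtractf sum_negf)
    also have "\<dots> = - (\<Sum>e\<in>UNIV. driem p q r d e x * \<omega> e x) - (\<Sum>e\<in>UNIV. riem g q r d e x * S p e x)"
      unfolding Q_def S_def leibniz_riem[OF w x] by (simp add: sum.distrib)
    finally show ?thesis .
  qed
  have b1: "(\<Sum>e\<in>UNIV. riem g a b c e x * S e d x) + (\<Sum>e\<in>UNIV. riem g b c a e x * S e d x)
      + (\<Sum>e\<in>UNIV. riem g c a b e x * S e d x) = 0"
  proof -
    have "(\<Sum>e\<in>UNIV. riem g a b c e x * S e d x) + (\<Sum>e\<in>UNIV. riem g b c a e x * S e d x)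
      + (\<Sum>e\<in>UNIV. riem g c a b e x * S e d x)
      = (\<Sum>e\<in>UNIV. (riem g a b c e x + riem g b c a e x + riem g c a b e x) * S e d x)"
      by (simp add: sum.distrib algebra_simps)
    also have "\<dots> = 0" using bianchi1[OF x] by simp
    finally show ?thesis .
  qed
  show ?thesis
    using Ki[of a b c] Ki[of b c a] Ki[of c a b] Kii[of a b c] Kii[of b c a] Kii[of c a b] b1
    by linarith
qed

lemma bianchi2: assumes x: "x \<in> U"
  shows "driem a b c d m x + driem b c a d m x + driem c a b d m x = 0"
  using bianchi2_gen[of "\<lambda>e y. if e = m then 1 else 0", OF _ x, of a b c d]
  by (simp add: SM_if)

end

context metric begin

lemma ric_fun: "ric g j k = (\<lambda>x. \<Sum>i\<in>UNIV. riem g i j k i x)" by (rule ext) (simp add: ric_def)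
lemma ric_SM[intro]: "SM (ric g j k)" unfolding ric_fun by (rule SM_sum) auto
lemma ric_diff: "x \<in> U \<Longrightarrow> ric g j k differentiable at x" using SM_diff ric_SM by blast
lemma scal_fun: "scal g = (\<lambda>x. \<Sum>i\<in>UNIV. \<Sum>j\<in>UNIV. ginv g i j x * ric g i j x)" by (rule ext) (simp add: scal_def)
lemma scal_SM[intro]: "SM (scal g)" unfolding scal_fun by (intro SM_sum SM_mult ginv_SM ric_SM)
lemma scal_diff: "x \<in> U \<Longrightarrow> scal g differentiable at x" using SM_diff scal_SM by blast

definition D11 :: "('n \<Rightarrow> 'n \<Rightarrow> real^'n \<Rightarrow> real) \<Rightarrow> 'n \<Rightarrow> 'n \<Rightarrow> 'n \<Rightarrow> real^'n \<Rightarrow> real" where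
  "D11 Y a b e x = pd a (Y b e) x - (\<Sum>m\<in>UNIV. chr g m a b x * Y m e x) + (\<Sum>m\<in>UNIV. chr g e a m x * Y b m x)"

definition D4 :: "('n \<Rightarrow> 'n \<Rightarrow> 'n \<Rightarrow> 'n \<Rightarrow> real^'n \<Rightarrow> real) \<Rightarrow> 'n \<Rightarrow> 'n \<Rightarrow> 'n \<Rightarrow> 'n \<Rightarrow> 'n \<Rightarrow> real^'n \<Rightarrow> real" where
  "D4 T a b c d e x = pd a (T b c d e) x
     - (\<Sum>m\<in>UNIV. chr g m a b x * T m c d e x + chr g m a c x * T b m d e x + chr g m a d x * T b c m e x)
     + (\<Sum>m\<in>UNIV. chr g e a m x * T b c d m x)"

lemma driem_D4: "driem a b c d e x = D4 (riem g) a b c d e x"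
  unfolding driem_def D4_def ..

lemma D4_local: assumes "\<And>b c d e y. y \<in> U \<Longrightarrow> T1 b c d e y = T2 b c d e y" and x: "x \<in> U"
  shows "D4 T1 a b c d e x = D4 T2 a b c d e x"
  unfolding D4_def using assms pd_local[OF openU x, of "T1 b c d e" "T2 b c d e" a] by simp

lemma D4_lin:
  assumes d1: "\<And>b c d e. T1 b c d e differentiable at x" and d2: "\<And>b c d e. T2 b c d e differentiable at x"
  shows "D4 (\<lambda>b c d e y. \<alpha> * T1 b c d e y + \<beta> * T2 b c d e y) a b c d e x = \<alpha> * D4 T1 a b c d e x + \<beta> * D4 T2 a b c d e x"
proof -
  have "pd a (\<lambda>y. \<alpha> * T1 b c d e y + \<beta> * T2 b c d e y) x = \<alpha> * pd a (T1 b c d e) x + \<beta> * pd a (T2 b c d e) x"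
    using pd_add[of "\<lambda>y. \<alpha> * T1 b c d e y" x "\<lambda>y. \<beta> * T2 b c d e y" a] pd_cmult[OF d1] pd_cmult[OF d2] d1 d2
    by simp
  then show ?thesis unfolding D4_def
    by (simp add: algebra_simps sum.distrib sum_distrib_left)
qed

lemma D4_L1: assumes X: "\<And>c d. X c d differentiable at x" and Y: "\<And>b e. Y b e differentiable at x"
  shows "D4 (\<lambda>b c d e y. X c d y * Y b e y) a b c d e x = cd2 X a c d x * Y b e x + X c d x * D11 Y a b e x"
  unfolding D4_def cd2_def D11_def pd_mult[OF X Y]
  by (simp add: algebra_simps sum.distrib sum_distrib_left sum_distrib_right sum_subtractf)

lemma D4_L2: assumes X: "\<And>c d. X c d differentiable at x" and Y: "\<And>b e. Y b e differentiable at x"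
  shows "D4 (\<lambda>b c d e y. X b d y * Y c e y) a b c d e x = cd2 X a b d x * Y c e x + X b d x * D11 Y a c e x"
  unfolding D4_def cd2_def D11_def pd_mult[OF X Y]
  by (simp add: algebra_simps sum.distrib sum_distrib_left sum_distrib_right sum_subtractf)

lemma cd2_g: "x \<in> U \<Longrightarrow> cd2 g a c d x = 0"
  unfolding cd2_def using compat by simp

lemma D11_delta: "D11 (\<lambda>b e y. if b = e then 1 else 0) a b e x = 0"
  unfolding D11_def by simp

definition ricm :: "'n \<Rightarrow> 'n \<Rightarrow> real^'n \<Rightarrow> real" where
  "ricm b e y = (\<Sum>l\<in>UNIV. ric g b l y * ginv g l e y)"

lemma ricm_fun: "ricm b e = (\<lambda>y. \<Sum>l\<in>UNIV. ric g b l y * ginv g l e y)" by (rule ext) (simp add: ricm_def)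
lemma ricm_SM[intro]: "SM (ricm b e)" unfolding ricm_fun by (intro SM_sum SM_mult ginv_SM ric_SM)

lemma D11_ricm: assumes x: "x \<in> U"
  shows "D11 ricm a b e x = (\<Sum>l\<in>UNIV. cov_ric g a b l x * ginv g l e x)"
proof -
  have pdr: "pd a (ricm b e) x = (\<Sum>l\<in>UNIV. pd a (ric g b l) x * ginv g l e x
      - ric g b l x * (\<Sum>m\<in>UNIV. chr g l a m x * ginv g m e x) - ric g b l x * (\<Sum>m\<in>UNIV. chr g e a m x * ginv g l m x))"
    unfolding ricm_fun using x ric_diff ginv_diff
    by (simp add: pd_sum pd_mult pd_ginv sum.distrib algebra_simps sum_negf)
  have e1: "(\<Sum>l\<in>UNIV. ric g b l x * (\<Sum>m\<in>UNIV. chr g l a m x * ginv g m e x))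
      = (\<Sum>l\<in>UNIV. (\<Sum>m\<in>UNIV. chr g m a l x * ric g b m x) * ginv g l e x)"
  proof -
    have "(\<Sum>l\<in>UNIV. ric g b l x * (\<Sum>m\<in>UNIV. chr g l a m x * ginv g m e x))
        = (\<Sum>m\<in>UNIV. (\<Sum>l\<in>UNIV. ric g b l x * chr g l a m x) * ginv g m e x)"
      by (rule contr_swap)
    then show ?thesis by (simp add: mult.commute)
  qed
  have e2: "(\<Sum>l\<in>UNIV. ric g b l x * (\<Sum>m\<in>UNIV. chr g e a m x * ginv g l m x))
      = (\<Sum>m\<in>UNIV. chr g e a m x * (\<Sum>l\<in>UNIV. ric g b l x * ginv g l m x))"
  proof -
    have "(\<Sum>l\<in>UNIV. ric g b l x * (\<Sum>m\<in>UNIV. chr g e a m x * ginv g l m x))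
        = (\<Sum>l\<in>UNIV. \<Sum>m\<in>UNIV. chr g e a m x * (ric g b l x * ginv g l m x))"
      by (simp add: sum_distrib_left mult_ac)
    also have "\<dots> = (\<Sum>m\<in>UNIV. \<Sum>l\<in>UNIV. chr g e a m x * (ric g b l x * ginv g l m x))"
      by (rule sum.swap)
    also have "\<dots> = (\<Sum>m\<in>UNIV. chr g e a m x * (\<Sum>l\<in>UNIV. ric g b l x * ginv g l m x))"
      by (simp add: sum_distrib_left)
    finally show ?thesis .
  qed
  have e3: "(\<Sum>m\<in>UNIV. chr g m a b x * (\<Sum>l\<in>UNIV. ric g m l x * ginv g l e x))
      = (\<Sum>l\<in>UNIV. (\<Sum>m\<in>UNIV. chr g m a b x * ric g m l x) * ginv g l e x)"
    by (rule contr_swap)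
  show ?thesis
    unfolding D11_def pdr cov_ric_def ricm_def
    using e1 e2 e3
    by (simp add: sum_subtractf sum.distrib algebra_simps sum_distrib_right)
qed

lemma cd2_sg: assumes x: "x \<in> U"
  shows "cd2 (\<lambda>c d y. scal g y * g c d y) a c d x = pd a (scal g) x * g c d x"
proof -
  have "cd2 (\<lambda>c d y. scal g y * g c d y) a c d x = pd a (scal g) x * g c d x + scal g x * cd2 g a c d x"
    unfolding cd2_def using pd_mult[OF scal_diff[OF x] g_diff[OF x]]
    by (simp add: algebra_simps sum.distrib sum_distrib_left sum_subtractf)
  then show ?thesis using cd2_g[OF x] by simp
qed

end


lemma sum_if_eq_l: "(\<Sum>a\<in>(UNIV::'n::finite set). if b = a then f a else 0) = (f b :: real)"
  by (rule trans[OF sum.delta']) simp_all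
lemma sum_if_eq_r: "(\<Sum>a\<in>(UNIV::'n::finite set). if a = b then f a else 0) = (f b :: real)"
  by (rule trans[OF sum.delta]) simp_all

lemma contract_alg:
  fixes cv :: "'n::finite \<Rightarrow> 'n \<Rightarrow> 'n \<Rightarrow> real" and gi gg :: "'n \<Rightarrow> 'n \<Rightarrow> real" and ds :: "'n \<Rightarrow> real"
    and Rm :: "'n \<Rightarrow> 'n \<Rightarrow> 'n \<Rightarrow> real" and DEx :: "'n \<Rightarrow> 'n \<Rightarrow> 'n \<Rightarrow> 'n \<Rightarrow> 'n \<Rightarrow> real"
    and P Q nn :: real
  assumes gis: "\<And>i j. gi i j = gi j i" and ggs: "\<And>i j. gg i j = gg j i"
    and gig: "\<And>i j. (\<Sum>l\<in>UNIV. gi i l * gg l j) = (if i = j then 1 else 0)"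
    and cvs: "\<And>a c d. cv a c d = cv a d c"
    and tr: "\<And>a. (\<Sum>c\<in>UNIV. \<Sum>d\<in>UNIV. gi c d * cv a c d) = ds a"
    and nn: "nn = real CARD('n)"
    and Rm_def: "\<And>a b e. Rm a b e = (\<Sum>l\<in>UNIV. cv a b l * gi l e)"
    and DEx_def: "\<And>a b c d e. DEx a b c d e = P * (cv a c d * (if b = e then 1 else 0) - cv a b d * (if c = e then 1 else 0)
          + (gg c d * Rm a b e - gg b d * Rm a c e))
        - Q * (ds a * gg c d * (if b = e then 1 else 0) - ds a * gg b d * (if c = e then 1 else 0))"
    and B: "\<And>a b c d e. DEx a b c d e + DEx b c a d e + DEx c a b d e = 0"
    and PQ1: "P * (nn - 2) = 1" and PQ2: "Q * (nn - 1) = P"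
  shows "2 * (\<Sum>a\<in>UNIV. Rm a b a) = ds b"
proof -
  define dv where "dv b = (\<Sum>a\<in>UNIV. Rm a b a)" for b
  have ggi: "(\<Sum>l\<in>UNIV. gg i l * gi l j) = (if i = j then 1 else 0)" for i j
  proof -
    have "(\<Sum>l\<in>UNIV. gg i l * gi l j) = (\<Sum>l\<in>UNIV. gi j l * gg l i)"
      by (rule sum.cong) (auto simp: gis ggs mult.commute)
    then show ?thesis using gig[of j i] by auto
  qed
  have h4: "(\<Sum>a\<in>UNIV. gg a d * Rm b c a) = cv b c d" for b c d
  proof -
    have "(\<Sum>a\<in>UNIV. gg a d * Rm b c a) = (\<Sum>a\<in>UNIV. gg d a * (\<Sum>l\<in>UNIV. gi a l * cv b c l))"
      unfolding Rm_def by (rule sum.cong) (auto simp: ggs gis mult.commute intro!: sum.cong)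
    also have "\<dots> = (\<Sum>l\<in>UNIV. (\<Sum>a\<in>UNIV. gg d a * gi a l) * cv b c l)" by (rule contr_swap)
    also have "\<dots> = cv b c d" by (simp only: ggi dsum1)
    finally show ?thesis .
  qed
  have h5: "(\<Sum>a\<in>UNIV. Rm b a a) = ds b" for b
  proof -
    have "(\<Sum>a\<in>UNIV. Rm b a a) = (\<Sum>a\<in>UNIV. \<Sum>l\<in>UNIV. gi a l * cv b a l)"
      unfolding Rm_def by (rule sum.cong) (auto simp: gis mult.commute intro!: sum.cong)
    then show ?thesis using tr by simp
  qed
  have h6: "(\<Sum>c\<in>UNIV. \<Sum>d\<in>UNIV. gi c d * cv c b d) = dv b" for b
    unfolding dv_def Rm_def by (rule sum.cong) (auto simp: gis mult.commute intro!: sum.cong)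
  have s1: "(\<Sum>a\<in>UNIV. DEx a b c d a) = P * (cv b c d - cv c b d + gg c d * dv b - gg b d * dv c)
      - Q * (ds b * gg c d - ds c * gg b d)" for b c d
  proof -
    have "(\<Sum>a\<in>UNIV. DEx a b c d a) = (\<Sum>a\<in>UNIV. (if b = a then P * cv a c d - Q * (ds a * gg c d) else 0)
        - (if c = a then P * cv a b d - Q * (ds a * gg b d) else 0) + (P * gg c d * Rm a b a - P * gg b d * Rm a c a))"
      by (rule sum.cong) (auto simp: DEx_def algebra_simps)
    also have "\<dots> = P * (cv b c d - cv c b d + gg c d * dv b - gg b d * dv c) - Q * (ds b * gg c d - ds c * gg b d)"
      unfolding sum.distrib sum_subtractf sum_if_eq_l dv_def
      by (simp add: sum_distrib_left[symmetric] algebra_simps)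
    finally show ?thesis .
  qed
  have s2: "(\<Sum>a\<in>UNIV. DEx b c a d a) = P * ((2 - nn) * cv b c d - gg c d * ds b) - Q * (1 - nn) * ds b * gg c d" for b c d
  proof -
    have "(\<Sum>a\<in>UNIV. DEx b c a d a) = (\<Sum>a\<in>UNIV. (if c = a then P * cv b a d - Q * (ds b * gg a d) else 0)
        + (P * gg a d * Rm b c a - P * gg c d * Rm b a a) - (P * cv b c d - Q * ds b * gg c d))"
      by (rule sum.cong) (auto simp: DEx_def algebra_simps)
    also have "\<dots> = (P * cv b c d - Q * (ds b * gg c d)) + (P * (\<Sum>a\<in>UNIV. gg a d * Rm b c a) - P * gg c d * (\<Sum>a\<in>UNIV. Rm b a a))
         - real CARD('n) * (P * cv b c d - Q * ds b * gg c d)"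
      unfolding sum.distrib sum_subtractf sum_if_eq_l
      by (simp add: sum_distrib_left[symmetric] mult.assoc right_diff_distrib)
    also have "\<dots> = P * ((2 - nn) * cv b c d - gg c d * ds b) - Q * (1 - nn) * ds b * gg c d"
      unfolding h4 h5 nn[symmetric] by (simp add: algebra_simps)
    finally show ?thesis .
  qed
  have s3: "(\<Sum>a\<in>UNIV. DEx c a b d a) = P * ((nn - 2) * cv c b d + gg b d * ds c) - Q * (nn - 1) * ds c * gg b d" for b c d
  proof -
    have "(\<Sum>a\<in>UNIV. DEx c a b d a) = (\<Sum>a\<in>UNIV. (P * cv c b d - Q * ds c * gg b d)
        - (if b = a then P * cv c a d - Q * (ds c * gg a d) else 0)
        + (P * gg b d * Rm c a a - P * gg a d * Rm c b a))"
      by (rule sum.cong) (auto simp: DEx_def algebra_simps)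
    also have "\<dots> = real CARD('n) * (P * cv c b d - Q * ds c * gg b d) - (P * cv c b d - Q * ds c * gg b d)
         + (P * gg b d * (\<Sum>a\<in>UNIV. Rm c a a) - P * (\<Sum>a\<in>UNIV. gg a d * Rm c b a))"
      unfolding sum.distrib sum_subtractf sum_if_eq_l
      by (simp add: sum_distrib_left[symmetric] mult.assoc right_diff_distrib)
    also have "\<dots> = P * ((nn - 2) * cv c b d + gg b d * ds c) - Q * (nn - 1) * ds c * gg b d"
      unfolding h4 h5 nn[symmetric] by (simp add: algebra_simps)
    finally show ?thesis .
  qed
  define X where "X b c d = P * (cv b c d - cv c b d + gg c d * dv b - gg b d * dv c) - Q * (ds b * gg c d - ds c * gg b d)
     + (P * ((2 - nn) * cv b c d - gg c d * ds b) - Q * (1 - nn) * ds b * gg c d)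
     + (P * ((nn - 2) * cv c b d + gg b d * ds c) - Q * (nn - 1) * ds c * gg b d)" for b c d
  have X0: "X b c d = 0" for c d
  proof -
    have "X b c d = (\<Sum>a\<in>UNIV. DEx a b c d a + DEx b c a d a + DEx c a b d a)"
      unfolding X_def sum.distrib s1 s2 s3 ..
    also have "\<dots> = 0" using B by simp
    finally show ?thesis .
  qed
  have c1: "(\<Sum>c\<in>UNIV. \<Sum>d\<in>UNIV. gi c d * gg c d) = nn"
  proof -
    have "(\<Sum>c\<in>UNIV. \<Sum>d\<in>UNIV. gi c d * gg c d) = (\<Sum>c\<in>UNIV. \<Sum>d\<in>UNIV. gi c d * gg d c)"
      by (simp add: ggs)
    also have "\<dots> = (\<Sum>c\<in>(UNIV::'n set). 1)" by (simp add: gig)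
    finally show ?thesis using nn by simp
  qed
  have c2: "(\<Sum>c\<in>UNIV. \<Sum>d\<in>UNIV. gi c d * (gg b d * f c)) = f b" for f
  proof -
    have "(\<Sum>c\<in>UNIV. \<Sum>d\<in>UNIV. gi c d * (gg b d * f c)) = (\<Sum>c\<in>UNIV. (\<Sum>d\<in>UNIV. gi c d * gg d b) * f c)"
      by (rule sum.cong) (auto simp: sum_distrib_right sum_distrib_left ggs mult_ac)
    also have "\<dots> = f b" by (simp add: gig)
    finally show ?thesis .
  qed
  have "0 = (\<Sum>c\<in>UNIV. \<Sum>d\<in>UNIV. gi c d * X b c d)" using X0 by simp
  also have "\<dots> = (\<Sum>c\<in>UNIV. \<Sum>d\<in>UNIV.
        (P * (1 + (2 - nn))) * (gi c d * cv b c d) + (P * (nn - 2 - 1)) * (gi c d * cv c b d)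
      + (P * dv b - Q * ds b - P * ds b - Q * (1 - nn) * ds b) * (gi c d * gg c d)
      + (- P) * (gi c d * (gg b d * dv c)) + (Q + P - Q * (nn - 1)) * (gi c d * (gg b d * ds c)))"
    unfolding X_def by (rule sum.cong[OF refl], rule sum.cong[OF refl]) (simp add: algebra_simps)
  also have "\<dots> = (P * (1 + (2 - nn))) * ds b + (P * (nn - 2 - 1)) * dv b
      + (P * dv b - Q * ds b - P * ds b - Q * (1 - nn) * ds b) * nn
      + (- P) * dv b + (Q + P - Q * (nn - 1)) * ds b"
    unfolding sum.distrib sum_distrib_left[symmetric] tr h6 c1 c2 ..
  also have "\<dots> = 2 * (P * (nn - 2)) * dv b - 2 * (P * (nn - 2)) * ds b
      + (Q * (nn - 1)) * (nn - 2) * ds b"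
    by (simp add: algebra_simps)
  also have "\<dots> = 2 * dv b - ds b" unfolding PQ2 PQ1 by simp
  finally show ?thesis unfolding dv_def by simp
qed


lemma swap_13: "(\<Sum>c\<in>A. \<Sum>d\<in>B. \<Sum>m\<in>C. f c d m) = (\<Sum>m\<in>C. \<Sum>d\<in>B. \<Sum>c\<in>A. (f c d m :: real))"
proof -
  have "(\<Sum>c\<in>A. \<Sum>d\<in>B. \<Sum>m\<in>C. f c d m) = (\<Sum>c\<in>A. \<Sum>m\<in>C. \<Sum>d\<in>B. f c d m)"
    by (rule sum.cong[OF refl], rule sum.swap)
  also have "\<dots> = (\<Sum>m\<in>C. \<Sum>c\<in>A. \<Sum>d\<in>B. f c d m)" by (rule sum.swap)
  also have "\<dots> = (\<Sum>m\<in>C. \<Sum>d\<in>B. \<Sum>c\<in>A. f c d m)" by (rule sum.cong[OF refl], rule sum.swap)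
  finally show ?thesis .
qed

lemma swap_23: "(\<Sum>c\<in>A. \<Sum>d\<in>B. \<Sum>m\<in>C. f c d m) = (\<Sum>c\<in>A. \<Sum>m\<in>C. \<Sum>d\<in>B. (f c d m :: real))"
  by (rule sum.cong[OF refl], rule sum.swap)

lemma (in metric) D4_comb6:
  fixes T1 T2 T3 T4 T5 T6 :: "'n \<Rightarrow> 'n \<Rightarrow> 'n \<Rightarrow> 'n \<Rightarrow> real^'n \<Rightarrow> real"
  assumes d: "\<And>b c d e. T1 b c d e differentiable at x" "\<And>b c d e. T2 b c d e differentiable at x"
    "\<And>b c d e. T3 b c d e differentiable at x" "\<And>b c d e. T4 b c d e differentiable at x"
    "\<And>b c d e. T5 b c d e differentiable at x" "\<And>b c d e. T6 b c d e differentiable at x"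
  shows "D4 (\<lambda>b c d e y. P * (T1 b c d e y - T2 b c d e y + (T3 b c d e y - T4 b c d e y)) - Q * (T5 b c d e y - T6 b c d e y)) a b c d e x
    = P * (D4 T1 a b c d e x - D4 T2 a b c d e x + (D4 T3 a b c d e x - D4 T4 a b c d e x)) - Q * (D4 T5 a b c d e x - D4 T6 a b c d e x)"
proof -
  have "pd a (\<lambda>y. P * (T1 b c d e y - T2 b c d e y + (T3 b c d e y - T4 b c d e y)) - Q * (T5 b c d e y - T6 b c d e y)) x
     = P * (pd a (T1 b c d e) x - pd a (T2 b c d e) x + (pd a (T3 b c d e) x - pd a (T4 b c d e) x))
       - Q * (pd a (T5 b c d e) x - pd a (T6 b c d e) x)"
    using d by (simp add: pd_diff pd_add pd_cmult)
  then show ?thesis unfolding D4_def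
    by (simp add: algebra_simps sum.distrib sum_subtractf sum_distrib_left)
qed

locale sol = metric U g for U :: "(real^'n::finite) set" and g +
  fixes F :: "real^'n \<Rightarrow> real" and \<rho> :: real
  assumes dim: "CARD('n) \<ge> 3"
    and smF: "SM F"
    and soliton: "\<forall>x\<in>U. \<forall>i j. ric g i j x = hess g F i j x + \<rho> * g i j x"
    and W0: "\<forall>x\<in>U. \<forall>i j k l. weyl g i j k l x = 0"
begin

definition nn :: real where "nn = real CARD('n)"
definition PP :: real where "PP = 1 / (nn - 2)"
definition QQ :: real where "QQ = 1 / ((nn - 1) * (nn - 2))"

lemma nn3: "nn \<ge> 3" using dim unfolding nn_def by simp
lemma PQ1: "PP * (nn - 2) = 1" unfolding PP_def using nn3 by simp
lemma PQ2: "QQ * (nn - 1) = PP"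
proof -
  have h: "nn - 1 \<noteq> 0" "nn - 2 \<noteq> 0" using nn3 by auto
  have "QQ * (nn - 1) = (nn - 1) / ((nn - 1) * (nn - 2))" unfolding QQ_def by simp
  also have "\<dots> = 1 / (nn - 2)" using h by simp
  finally show ?thesis unfolding PP_def .
qed

lemma hess_sym: assumes x: "x \<in> U" shows "hess g F i j x = hess g F j i x"
proof -
  have "pd i (pd j F) x = pd j (pd i F) x"
    by (rule pd_swap[OF openU x]) (use SM_diff SM_pd smF x in auto)
  then show ?thesis unfolding hess_def using chr_sym[OF x] by simp
qed

lemma ric_sym: "x \<in> U \<Longrightarrow> ric g i j x = ric g j i x"
  using soliton hess_sym g_sym by simp

lemma cov_ric_sym: assumes x: "x \<in> U" shows "cov_ric g a c d x = cov_ric g a d c x"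
proof -
  have "pd a (ric g c d) x = pd a (ric g d c) x" by (rule pd_local[OF openU x]) (simp add: ric_sym)
  then show ?thesis unfolding cov_ric_def using ric_sym[OF x] by (simp add: add.commute)
qed

lemma trace_cov: assumes x: "x \<in> U"
  shows "(\<Sum>c\<in>UNIV. \<Sum>d\<in>UNIV. ginv g c d x * cov_ric g a c d x) = pd a (scal g) x"
proof -
  have A: "pd a (scal g) x = (\<Sum>c\<in>UNIV. \<Sum>d\<in>UNIV. pd a (ginv g c d) x * ric g c d x + ginv g c d x * pd a (ric g c d) x)"
    unfolding scal_fun using x ginv_diff ric_diff
    by (simp add: pd_sum pd_mult differentiable_sum_fun)
  have B: "(\<Sum>c\<in>UNIV. \<Sum>d\<in>UNIV. pd a (ginv g c d) x * ric g c d x)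
     = - (\<Sum>c\<in>UNIV. \<Sum>d\<in>UNIV. \<Sum>m\<in>UNIV. chr g c a m x * ginv g m d x * ric g c d x)
       - (\<Sum>c\<in>UNIV. \<Sum>d\<in>UNIV. \<Sum>m\<in>UNIV. chr g d a m x * ginv g c m x * ric g c d x)"
  proof -
    have i: "pd a (ginv g c d) x * ric g c d x = - (\<Sum>m\<in>UNIV. chr g c a m x * ginv g m d x * ric g c d x)
       - (\<Sum>m\<in>UNIV. chr g d a m x * ginv g c m x * ric g c d x)" for c d
      unfolding pd_ginv[OF x] sum.distrib by (simp add: left_diff_distrib sum_distrib_right)
    show ?thesis unfolding i sum_subtractf sum_negf by simp
  qed
  have C: "(\<Sum>c\<in>UNIV. \<Sum>d\<in>UNIV. ginv g c d x * cov_ric g a c d x)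
     = (\<Sum>c\<in>UNIV. \<Sum>d\<in>UNIV. ginv g c d x * pd a (ric g c d) x)
       - (\<Sum>c\<in>UNIV. \<Sum>d\<in>UNIV. \<Sum>m\<in>UNIV. ginv g c d x * chr g m a c x * ric g m d x)
       - (\<Sum>c\<in>UNIV. \<Sum>d\<in>UNIV. \<Sum>m\<in>UNIV. ginv g c d x * chr g m a d x * ric g c m x)"
    unfolding cov_ric_def
    by (simp add: sum_distrib_left sum.distrib sum_subtractf algebra_simps)
  have D1: "(\<Sum>c\<in>UNIV. \<Sum>d\<in>UNIV. \<Sum>m\<in>UNIV. ginv g c d x * chr g m a c x * ric g m d x)
      = (\<Sum>c\<in>UNIV. \<Sum>d\<in>UNIV. \<Sum>m\<in>UNIV. chr g c a m x * ginv g m d x * ric g c d x)"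
    by (subst swap_13) (simp add: mult_ac)
  have D2: "(\<Sum>c\<in>UNIV. \<Sum>d\<in>UNIV. \<Sum>m\<in>UNIV. ginv g c d x * chr g m a d x * ric g c m x)
      = (\<Sum>c\<in>UNIV. \<Sum>d\<in>UNIV. \<Sum>m\<in>UNIV. chr g d a m x * ginv g c m x * ric g c d x)"
    by (subst swap_23) (simp add: mult_ac)
  have E: "pd a (scal g) x = (\<Sum>c\<in>UNIV. \<Sum>d\<in>UNIV. pd a (ginv g c d) x * ric g c d x)
      + (\<Sum>c\<in>UNIV. \<Sum>d\<in>UNIV. ginv g c d x * pd a (ric g c d) x)"
    unfolding A by (simp add: sum.distrib)
  show ?thesis using B C D1 D2 E by linarith
qed


definition dl :: "'n \<Rightarrow> 'n \<Rightarrow> real^'n \<Rightarrow> real" where "dl b e y = (if b = e then 1 else 0)"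
definition sg :: "'n \<Rightarrow> 'n \<Rightarrow> real^'n \<Rightarrow> real" where "sg c d y = scal g y * g c d y"
definition Ew :: "'n \<Rightarrow> 'n \<Rightarrow> 'n \<Rightarrow> 'n \<Rightarrow> real^'n \<Rightarrow> real" where
  "Ew b c d e y = PP * (ric g c d y * dl b e y - ric g b d y * dl c e y + (g c d y * ricm b e y - g b d y * ricm c e y))
     - QQ * (sg c d y * dl b e y - sg b d y * dl c e y)"

lemma riem_E: assumes y: "y \<in> U" shows "riem g b c d e y = Ew b c d e y"
proof -
  have w: "weyl g b c d l y = 0" for l using W0 y by blast
  have rmf: "rm g b c d l y = PP * (ric g c d y * g b l y - ric g b d y * g c l y + ric g b l y * g c d y - ric g c l y * g b d y)
      - (scal g y * QQ) * (g c d y * g b l y - g b d y * g c l y)" for l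
    using w[of l] unfolding weyl_def PP_def QQ_def nn_def by (simp add: algebra_simps)
  have "riem g b c d e y = (\<Sum>m\<in>UNIV. riem g b c d m y * (\<Sum>l\<in>UNIV. g m l y * ginv g l e y))"
    by (simp add: g_ginv[OF y])
  also have "\<dots> = (\<Sum>l\<in>UNIV. rm g b c d l y * ginv g l e y)"
    unfolding rm_def by (rule dswap3[symmetric])
  also have "\<dots> = (\<Sum>l\<in>UNIV. PP * (ric g c d y * (g b l y * ginv g l e y)) - PP * (ric g b d y * (g c l y * ginv g l e y))
        + PP * (g c d y * (ric g b l y * ginv g l e y)) - PP * (g b d y * (ric g c l y * ginv g l e y))
        - (scal g y * QQ) * (g c d y * (g b l y * ginv g l e y)) + (scal g y * QQ) * (g b d y * (g c l y * ginv g l e y)))"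
    unfolding rmf by (rule sum.cong[OF refl]) (simp add: algebra_simps)
  also have "\<dots> = PP * (ric g c d y * (\<Sum>l\<in>UNIV. g b l y * ginv g l e y)) - PP * (ric g b d y * (\<Sum>l\<in>UNIV. g c l y * ginv g l e y))
        + PP * (g c d y * (\<Sum>l\<in>UNIV. ric g b l y * ginv g l e y)) - PP * (g b d y * (\<Sum>l\<in>UNIV. ric g c l y * ginv g l e y))
        - (scal g y * QQ) * (g c d y * (\<Sum>l\<in>UNIV. g b l y * ginv g l e y)) + (scal g y * QQ) * (g b d y * (\<Sum>l\<in>UNIV. g c l y * ginv g l e y))"
    by (simp only: sum.distrib sum_subtractf sum_distrib_left[symmetric])
  also have "\<dots> = Ew b c d e y"
    unfolding g_ginv[OF y] Ew_def ricm_def[symmetric] dl_def sg_def by (simp add: algebra_simps)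
  finally show ?thesis .
qed

lemma dl_SM[intro]: "SM (dl b e)" unfolding dl_def by (cases "b = e") auto
lemma sg_SM[intro]: "SM (sg c d)" unfolding sg_def by (intro SM_mult scal_SM g_SM)


definition Rm2 :: "'n \<Rightarrow> 'n \<Rightarrow> 'n \<Rightarrow> real^'n \<Rightarrow> real" where
  "Rm2 a b e x = (\<Sum>l\<in>UNIV. cov_ric g a b l x * ginv g l e x)"

lemma driem_DE: assumes x: "x \<in> U"
  shows "driem a b c d e x = PP * (cov_ric g a c d x * (if b = e then 1 else 0) - cov_ric g a b d x * (if c = e then 1 else 0)
          + (g c d x * Rm2 a b e x - g b d x * Rm2 a c e x))
        - QQ * (pd a (scal g) x * g c d x * (if b = e then 1 else 0) - pd a (scal g) x * g b d x * (if c = e then 1 else 0))"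
proof -
  have "driem a b c d e x = D4 Ew a b c d e x"
    unfolding driem_D4 by (rule D4_local[OF _ x]) (simp add: riem_E)
  also have "\<dots> = D4 (\<lambda>b c d e y. PP * ((\<lambda>b c d e y. ric g c d y * dl b e y) b c d e y - (\<lambda>b c d e y. ric g b d y * dl c e y) b c d e y
        + ((\<lambda>b c d e y. g c d y * ricm b e y) b c d e y - (\<lambda>b c d e y. g b d y * ricm c e y) b c d e y))
        - QQ * ((\<lambda>b c d e y. sg c d y * dl b e y) b c d e y - (\<lambda>b c d e y. sg b d y * dl c e y) b c d e y)) a b c d e x"
    unfolding Ew_def by simp
  also have "\<dots> = PP * (D4 (\<lambda>b c d e y. ric g c d y * dl b e y) a b c d e x - D4 (\<lambda>b c d e y. ric g b d y * dl c e y) a b c d e x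
        + (D4 (\<lambda>b c d e y. g c d y * ricm b e y) a b c d e x - D4 (\<lambda>b c d e y. g b d y * ricm c e y) a b c d e x))
        - QQ * (D4 (\<lambda>b c d e y. sg c d y * dl b e y) a b c d e x - D4 (\<lambda>b c d e y. sg b d y * dl c e y) a b c d e x)"
    by (rule D4_comb6) (use x SM_diff ric_SM dl_SM g_SM ricm_SM sg_SM in \<open>auto intro!: differentiable_mult\<close>)
  also have "\<dots> = PP * (cov_ric g a c d x * (if b = e then 1 else 0) - cov_ric g a b d x * (if c = e then 1 else 0)
          + (g c d x * Rm2 a b e x - g b d x * Rm2 a c e x))
        - QQ * (pd a (scal g) x * g c d x * (if b = e then 1 else 0) - pd a (scal g) x * g b d x * (if c = e then 1 else 0))"
  proof -
    have dd: "ric g c d differentiable at x" "dl b e differentiable at x" "g c d differentiable at x"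
       "ricm b e differentiable at x" "sg c d differentiable at x" for b c d e
      using x SM_diff ric_SM dl_SM g_SM ricm_SM sg_SM by blast+
    have D11dl: "D11 dl a b e x = 0" for b e
    proof -
      have "dl = (\<lambda>b e y. if b = e then 1 else 0)" by (intro ext) (simp add: dl_def)
      then show ?thesis using D11_delta by simp
    qed
    have cr: "cd2 (ric g) a c d x = cov_ric g a c d x" for c d unfolding cd2_def cov_ric_def ..
    have csg: "cd2 sg a c d x = pd a (scal g) x * g c d x" for c d
    proof -
      have "sg = (\<lambda>c d y. scal g y * g c d y)" by (intro ext) (simp add: sg_def)
      then show ?thesis using cd2_sg[OF x] by simp
    qed
    show ?thesis
      unfolding D4_L1[of "ric g" x dl, OF dd(1) dd(2)] D4_L2[of "ric g" x dl, OF dd(1) dd(2)]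
        D4_L1[of g x ricm, OF dd(3) dd(4)] D4_L2[of g x ricm, OF dd(3) dd(4)]
        D4_L1[of sg x dl, OF dd(5) dd(2)] D4_L2[of sg x dl, OF dd(5) dd(2)]
        D11dl cr csg cd2_g[OF x] D11_ricm[OF x] Rm2_def[symmetric]
      by (simp add: dl_def)
  qed
  finally show ?thesis .
qed

lemma contracted_bianchi: assumes x: "x \<in> U"
  shows "2 * (\<Sum>a\<in>UNIV. Rm2 a b a x) = pd b (scal g) x"
proof (rule contract_alg[where cv="\<lambda>a c d. cov_ric g a c d x" and gi="\<lambda>i j. ginv g i j x" and gg="\<lambda>i j. g i j x"
      and ds="\<lambda>a. pd a (scal g) x" and Rm="\<lambda>a b e. Rm2 a b e x" and P=PP and Q=QQ and nn=nn
      and DEx="\<lambda>a b c d e. driem a b c d e x"])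
  show "\<And>a b c d e. driem a b c d e x + driem b c a d e x + driem c a b d e x = 0"
    using bianchi2[OF x] .
qed (use x ginv_sym g_sym ginv_g cov_ric_sym trace_cov PQ1 PQ2 driem_DE Rm2_def nn_def in auto)

end

context sol begin

definition dF :: "'n \<Rightarrow> real^'n \<Rightarrow> real" where "dF c = pd c F"
lemma dF_SM[intro]: "SM (dF c)" unfolding dF_def using SM_pd smF by blast

lemma hess_cd1: "hess g F = cd1 dF"
  by (intro ext) (simp add: hess_def cd1_def dF_def)

lemma hess_SM[intro]: "SM (hess g F i j)" unfolding hess_cd1 by (intro cd1_SM dF_SM)

lemma cov_ric_hess: assumes x: "x \<in> U" shows "cov_ric g k i j x = cd2 (hess g F) k i j x"
proof -
  have "pd k (ric g i j) x = pd k (\<lambda>y. hess g F i j y + \<rho> * g i j y) x"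
    by (rule pd_local[OF openU x]) (use soliton in auto)
  also have "\<dots> = pd k (hess g F i j) x + \<rho> * pd k (g i j) x"
    using x SM_diff[OF hess_SM x] g_diff by (simp add: pd_add pd_cmult)
  finally have p: "pd k (ric g i j) x = pd k (hess g F i j) x + \<rho> * pd k (g i j) x" .
  have "cov_ric g k i j x = cd2 (hess g F) k i j x + \<rho> * cd2 g k i j x"
    unfolding cov_ric_def cd2_def p using soliton x
    by (simp add: algebra_simps sum.distrib sum_distrib_left)
  then show ?thesis using cd2_g[OF x] by simp
qed

lemma cd2_hess_sym: assumes x: "x \<in> U" shows "cd2 (hess g F) a b c x = cd2 (hess g F) a c b x"
proof -
  have "pd a (hess g F b c) x = pd a (hess g F c b) x" by (rule pd_local[OF openU x]) (simp add: hess_sym)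
  then show ?thesis unfolding cd2_def using hess_sym[OF x] by (simp add: add.commute)
qed

lemma cotton_riem: assumes x: "x \<in> U"
  shows "cov_ric g k i j x - cov_ric g j i k x = - (\<Sum>e\<in>UNIV. riem g k j i e x * pd e F x)"
proof -
  have "cov_ric g k i j x - cov_ric g j i k x = cd2 (cd1 dF) k j i x - cd2 (cd1 dF) j k i x"
    unfolding cov_ric_hess[OF x] using cd2_hess_sym[OF x] hess_cd1 by metis
  also have "\<dots> = - (\<Sum>e\<in>UNIV. riem g k j i e x * dF e x)" by (rule ricci1[OF dF_SM x])
  finally show ?thesis unfolding dF_def .
qed

lemma Grho_pd: assumes x: "x \<in> U"
  shows "(1/2) * pd a (Grho g F \<rho>) x = (\<Sum>b\<in>UNIV. \<Sum>c\<in>UNIV. ginv g b c x * ric g a b x * pd c F x)"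
proof -
  have dF1: "pd b F differentiable at x" for b using SM_diff[OF dF_SM x] unfolding dF_def .
  have dF0: "F differentiable at x" using SM_diff[OF smF x] .
  have Gf: "Grho g F \<rho> = (\<lambda>y. (\<Sum>b\<in>UNIV. \<Sum>c\<in>UNIV. ginv g b c y * pd b F y * pd c F y) + 2 * \<rho> * F y)"
    by (intro ext) (simp add: Grho_def norm1_def)
  have pdd: "pd a (pd b F) x = hess g F a b x + (\<Sum>m\<in>UNIV. chr g m a b x * pd m F x)" for b
    unfolding hess_def by simp
  have "pd a (Grho g F \<rho>) x = (\<Sum>b\<in>UNIV. \<Sum>c\<in>UNIV. pd a (ginv g b c) x * pd b F x * pd c F x
       + ginv g b c x * pd a (pd b F) x * pd c F x + ginv g b c x * pd b F x * pd a (pd c F) x) + 2 * \<rho> * pd a F x"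
    unfolding Gf using x ginv_diff dF1 dF0
    by (simp add: pd_add pd_sum pd_mult pd_cmult differentiable_sum_fun algebra_simps)
  also have "\<dots> = (\<Sum>b\<in>UNIV. \<Sum>c\<in>UNIV. pd a (ginv g b c) x * pd b F x * pd c F x)
       + (\<Sum>b\<in>UNIV. \<Sum>c\<in>UNIV. ginv g b c x * (\<Sum>m\<in>UNIV. chr g m a b x * pd m F x) * pd c F x)
       + (\<Sum>b\<in>UNIV. \<Sum>c\<in>UNIV. ginv g b c x * pd b F x * (\<Sum>m\<in>UNIV. chr g m a c x * pd m F x))
       + (\<Sum>b\<in>UNIV. \<Sum>c\<in>UNIV. ginv g b c x * hess g F a b x * pd c F x)
       + (\<Sum>b\<in>UNIV. \<Sum>c\<in>UNIV. ginv g b c x * pd b F x * hess g F a c x) + 2 * \<rho> * pd a F x"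
    unfolding pdd by (simp add: sum.distrib algebra_simps)
  also have "(\<Sum>b\<in>UNIV. \<Sum>c\<in>UNIV. pd a (ginv g b c) x * pd b F x * pd c F x)
     = - (\<Sum>b\<in>UNIV. \<Sum>c\<in>UNIV. ginv g b c x * (\<Sum>m\<in>UNIV. chr g m a b x * pd m F x) * pd c F x)
       - (\<Sum>b\<in>UNIV. \<Sum>c\<in>UNIV. ginv g b c x * pd b F x * (\<Sum>m\<in>UNIV. chr g m a c x * pd m F x))"
  proof -
    have i: "pd a (ginv g b c) x * pd b F x * pd c F x = - (\<Sum>m\<in>UNIV. chr g b a m x * ginv g m c x * pd b F x * pd c F x)
       - (\<Sum>m\<in>UNIV. chr g c a m x * ginv g b m x * pd b F x * pd c F x)" for b c
      unfolding pd_ginv[OF x] sum.distrib by (simp add: left_diff_distrib sum_distrib_right)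
    have e1: "(\<Sum>b\<in>UNIV. \<Sum>c\<in>UNIV. \<Sum>m\<in>UNIV. chr g b a m x * ginv g m c x * pd b F x * pd c F x)
        = (\<Sum>b\<in>UNIV. \<Sum>c\<in>UNIV. ginv g b c x * (\<Sum>m\<in>UNIV. chr g m a b x * pd m F x) * pd c F x)"
    proof -
      have "(\<Sum>b\<in>UNIV. \<Sum>c\<in>UNIV. \<Sum>m\<in>UNIV. chr g b a m x * ginv g m c x * pd b F x * pd c F x)
          = (\<Sum>m\<in>UNIV. \<Sum>c\<in>UNIV. \<Sum>b\<in>UNIV. chr g b a m x * ginv g m c x * pd b F x * pd c F x)"
        by (rule swap_13)
      also have "\<dots> = (\<Sum>b\<in>UNIV. \<Sum>c\<in>UNIV. ginv g b c x * (\<Sum>m\<in>UNIV. chr g m a b x * pd m F x) * pd c F x)"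
        by (simp add: sum_distrib_left sum_distrib_right mult_ac chr_sym[OF x])
      finally show ?thesis .
    qed
    have e2: "(\<Sum>b\<in>UNIV. \<Sum>c\<in>UNIV. \<Sum>m\<in>UNIV. chr g c a m x * ginv g b m x * pd b F x * pd c F x)
        = (\<Sum>b\<in>UNIV. \<Sum>c\<in>UNIV. ginv g b c x * pd b F x * (\<Sum>m\<in>UNIV. chr g m a c x * pd m F x))"
    proof -
      have "(\<Sum>b\<in>UNIV. \<Sum>c\<in>UNIV. \<Sum>m\<in>UNIV. chr g c a m x * ginv g b m x * pd b F x * pd c F x)
          = (\<Sum>b\<in>UNIV. \<Sum>m\<in>UNIV. \<Sum>c\<in>UNIV. chr g c a m x * ginv g b m x * pd b F x * pd c F x)"
        by (rule swap_23)
      also have "\<dots> = (\<Sum>b\<in>UNIV. \<Sum>c\<in>UNIV. ginv g b c x * pd b F x * (\<Sum>m\<in>UNIV. chr g m a c x * pd m F x))"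
        by (simp add: sum_distrib_left sum_distrib_right mult_ac chr_sym[OF x])
      finally show ?thesis .
    qed
    show ?thesis unfolding i sum_subtractf sum_negf e1 e2 by simp
  qed
  also have "(\<Sum>b\<in>UNIV. \<Sum>c\<in>UNIV. ginv g b c x * pd b F x * hess g F a c x)
      = (\<Sum>b\<in>UNIV. \<Sum>c\<in>UNIV. ginv g b c x * hess g F a b x * pd c F x)"
    by (subst sum.swap) (simp add: ginv_sym[OF x] mult_ac)
  finally have "pd a (Grho g F \<rho>) x = 2 * (\<Sum>b\<in>UNIV. \<Sum>c\<in>UNIV. ginv g b c x * hess g F a b x * pd c F x) + 2 * \<rho> * pd a F x"
    by simp
  also have "(\<Sum>b\<in>UNIV. \<Sum>c\<in>UNIV. ginv g b c x * hess g F a b x * pd c F x)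
     = (\<Sum>b\<in>UNIV. \<Sum>c\<in>UNIV. ginv g b c x * ric g a b x * pd c F x) - \<rho> * pd a F x"
  proof -
    have "(\<Sum>b\<in>UNIV. \<Sum>c\<in>UNIV. ginv g b c x * hess g F a b x * pd c F x)
      = (\<Sum>b\<in>UNIV. \<Sum>c\<in>UNIV. ginv g b c x * ric g a b x * pd c F x)
        - \<rho> * (\<Sum>c\<in>UNIV. (\<Sum>b\<in>UNIV. g a b x * ginv g b c x) * pd c F x)"
    proof -
      have "(\<Sum>b\<in>UNIV. \<Sum>c\<in>UNIV. ginv g b c x * hess g F a b x * pd c F x)
        = (\<Sum>b\<in>UNIV. \<Sum>c\<in>UNIV. ginv g b c x * ric g a b x * pd c F x - \<rho> * (g a b x * ginv g b c x * pd c F x))"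
        using soliton x by (intro sum.cong refl) (simp add: algebra_simps)
      also have "\<dots> = (\<Sum>b\<in>UNIV. \<Sum>c\<in>UNIV. ginv g b c x * ric g a b x * pd c F x)
        - \<rho> * (\<Sum>b\<in>UNIV. \<Sum>c\<in>UNIV. g a b x * ginv g b c x * pd c F x)"
        by (simp add: sum_subtractf sum_distrib_left)
      also have "(\<Sum>b\<in>UNIV. \<Sum>c\<in>UNIV. g a b x * ginv g b c x * pd c F x) = (\<Sum>c\<in>UNIV. \<Sum>b\<in>UNIV. g a b x * ginv g b c x * pd c F x)"
        by (rule sum.swap)
      also have "\<dots> = (\<Sum>c\<in>UNIV. (\<Sum>b\<in>UNIV. g a b x * ginv g b c x) * pd c F x)"
        by (simp add: sum_distrib_right)
      finally show ?thesis .
    qed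
    then show ?thesis by (simp add: g_ginv[OF x])
  qed
  finally show ?thesis by (simp add: algebra_simps)
qed

end


lemma pull3: "(\<Sum>a\<in>A. \<Sum>b\<in>B. \<Sum>c\<in>C. \<Sum>i\<in>I. g a b c i) = (\<Sum>i\<in>I. \<Sum>a\<in>A. \<Sum>b\<in>B. \<Sum>c\<in>C. (g a b c i::real))"
proof -
  have "(\<Sum>a\<in>A. \<Sum>b\<in>B. \<Sum>c\<in>C. \<Sum>i\<in>I. g a b c i) = (\<Sum>a\<in>A. \<Sum>b\<in>B. \<Sum>i\<in>I. \<Sum>c\<in>C. g a b c i)"
    by (intro sum.cong refl sum.swap)
  also have "\<dots> = (\<Sum>a\<in>A. \<Sum>i\<in>I. \<Sum>b\<in>B. \<Sum>c\<in>C. g a b c i)"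
    by (intro sum.cong refl sum.swap)
  also have "\<dots> = (\<Sum>i\<in>I. \<Sum>a\<in>A. \<Sum>b\<in>B. \<Sum>c\<in>C. g a b c i)"
    by (rule sum.swap)
  finally show ?thesis .
qed

lemma swap3x3: "(\<Sum>a\<in>A. \<Sum>b\<in>B. \<Sum>c\<in>C. \<Sum>i\<in>I. \<Sum>j\<in>J. \<Sum>k\<in>K. f a b c i j k)
   = (\<Sum>i\<in>I. \<Sum>j\<in>J. \<Sum>k\<in>K. \<Sum>a\<in>A. \<Sum>b\<in>B. \<Sum>c\<in>C. (f a b c i j k::real))"
proof -
  have "(\<Sum>a\<in>A. \<Sum>b\<in>B. \<Sum>c\<in>C. \<Sum>i\<in>I. \<Sum>j\<in>J. \<Sum>k\<in>K. f a b c i j k)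
     = (\<Sum>i\<in>I. \<Sum>a\<in>A. \<Sum>b\<in>B. \<Sum>c\<in>C. \<Sum>j\<in>J. \<Sum>k\<in>K. f a b c i j k)" by (rule pull3)
  also have "\<dots> = (\<Sum>i\<in>I. \<Sum>j\<in>J. \<Sum>a\<in>A. \<Sum>b\<in>B. \<Sum>c\<in>C. \<Sum>k\<in>K. f a b c i j k)"
    by (intro sum.cong refl pull3)
  also have "\<dots> = (\<Sum>i\<in>I. \<Sum>j\<in>J. \<Sum>k\<in>K. \<Sum>a\<in>A. \<Sum>b\<in>B. \<Sum>c\<in>C. f a b c i j k)"
    by (intro sum.cong refl pull3)
  finally show ?thesis .
qed

lemma swap_13_gen: "(\<Sum>i\<in>A. \<Sum>j\<in>B. \<Sum>k\<in>C. f i j k) = (\<Sum>k\<in>C. \<Sum>i\<in>A. \<Sum>j\<in>B. (f i j k :: real))"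
proof -
  have "(\<Sum>i\<in>A. \<Sum>j\<in>B. \<Sum>k\<in>C. f i j k) = (\<Sum>i\<in>A. \<Sum>k\<in>C. \<Sum>j\<in>B. f i j k)"
    by (intro sum.cong refl sum.swap)
  also have "\<dots> = (\<Sum>k\<in>C. \<Sum>i\<in>A. \<Sum>j\<in>B. f i j k)" by (rule sum.swap)
  finally show ?thesis .
qed

lemma swap_13_gen2: "(\<Sum>i\<in>A. \<Sum>j\<in>B. \<Sum>k\<in>C. f i j k) = (\<Sum>j\<in>B. \<Sum>k\<in>C. \<Sum>i\<in>A. (f i j k :: real))"
proof -
  have "(\<Sum>i\<in>A. \<Sum>j\<in>B. \<Sum>k\<in>C. f i j k) = (\<Sum>j\<in>B. \<Sum>i\<in>A. \<Sum>k\<in>C. f i j k)"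
    by (rule sum.swap)
  also have "\<dots> = (\<Sum>j\<in>B. \<Sum>k\<in>C. \<Sum>i\<in>A. f i j k)"
    by (intro sum.cong refl sum.swap)
  finally show ?thesis .
qed

locale tens =
  fixes gi :: "'n::finite \<Rightarrow> 'n \<Rightarrow> real"
  assumes gis: "\<And>i j. gi i j = gi j i"
begin

definition raise :: "('n \<Rightarrow> 'n \<Rightarrow> 'n \<Rightarrow> real) \<Rightarrow> 'n \<Rightarrow> 'n \<Rightarrow> 'n \<Rightarrow> real" where
  "raise T i j k = (\<Sum>a\<in>UNIV. \<Sum>b\<in>UNIV. \<Sum>c\<in>UNIV. gi i a * gi j b * gi k c * T a b c)"

definition B3 :: "('n \<Rightarrow> 'n \<Rightarrow> 'n \<Rightarrow> real) \<Rightarrow> ('n \<Rightarrow> 'n \<Rightarrow> 'n \<Rightarrow> real) \<Rightarrow> real" where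
  "B3 S T = (\<Sum>i\<in>UNIV. \<Sum>j\<in>UNIV. \<Sum>k\<in>UNIV. S i j k * raise T i j k)"

definition N3 :: "('n \<Rightarrow> 'n \<Rightarrow> 'n \<Rightarrow> real) \<Rightarrow> real" where
  "N3 T = (\<Sum>i\<in>UNIV. \<Sum>j\<in>UNIV. \<Sum>k\<in>UNIV. \<Sum>a\<in>UNIV. \<Sum>b\<in>UNIV. \<Sum>c\<in>UNIV.
      gi i a * gi j b * gi k c * T i j k * T a b c)"

lemma N3_B3: "N3 T = B3 T T"
  unfolding N3_def B3_def raise_def by (simp add: sum_distrib_left mult_ac)

lemma B3_expand: "B3 S T = (\<Sum>i\<in>UNIV. \<Sum>j\<in>UNIV. \<Sum>k\<in>UNIV. \<Sum>a\<in>UNIV. \<Sum>b\<in>UNIV. \<Sum>c\<in>UNIV. gi i a * gi j b * gi k c * S i j k * T a b c)"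
  unfolding B3_def raise_def by (simp add: sum_distrib_left mult_ac)

lemma B3_sym: "B3 S T = B3 T S"
proof -
  have "B3 S T = (\<Sum>a\<in>UNIV. \<Sum>b\<in>UNIV. \<Sum>c\<in>UNIV. \<Sum>i\<in>UNIV. \<Sum>j\<in>UNIV. \<Sum>k\<in>UNIV. gi i a * gi j b * gi k c * S i j k * T a b c)"
    unfolding B3_expand by (rule swap3x3[symmetric])
  also have "\<dots> = (\<Sum>a\<in>UNIV. \<Sum>b\<in>UNIV. \<Sum>c\<in>UNIV. \<Sum>i\<in>UNIV. \<Sum>j\<in>UNIV. \<Sum>k\<in>UNIV. gi a i * gi b j * gi c k * T a b c * S i j k)"
    by (intro sum.cong refl, rename_tac a b c i j k, subst gis[of a i], subst gis[of b j], subst gis[of c k], simp add: mult_ac)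
  also have "\<dots> = B3 T S" unfolding B3_expand ..
  finally show ?thesis .
qed

lemma B3_lin1: "B3 (\<lambda>i j k. \<alpha> * S1 i j k + \<beta> * S2 i j k) T = \<alpha> * B3 S1 T + \<beta> * B3 S2 T"
  unfolding B3_def by (simp add: algebra_simps sum.distrib sum_distrib_left)

lemma B3_lin2: "B3 T (\<lambda>i j k. \<alpha> * S1 i j k + \<beta> * S2 i j k) = \<alpha> * B3 T S1 + \<beta> * B3 T S2"
  by (subst (1 2 3) B3_sym) (rule B3_lin1)

end

locale tens2 = tens gi for gi :: "'n::finite \<Rightarrow> 'n \<Rightarrow> real" +
  fixes gg :: "'n \<Rightarrow> 'n \<Rightarrow> real"
  assumes ggs: "\<And>i j. gg i j = gg j i"
    and gig: "\<And>i j. (\<Sum>l\<in>UNIV. gi i l * gg l j) = (if i = j then 1 else 0)"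
begin

lemma ggi: "(\<Sum>l\<in>UNIV. gg i l * gi l j) = (if i = j then 1 else 0)"
proof -
  have "(\<Sum>l\<in>UNIV. gg i l * gi l j) = (\<Sum>l\<in>UNIV. gi j l * gg l i)"
    by (rule sum.cong) (auto simp: gis ggs mult.commute)
  then show ?thesis using gig[of j i] by auto
qed

definition vr :: "('n \<Rightarrow> real) \<Rightarrow> 'n \<Rightarrow> real" where "vr V k = (\<Sum>c\<in>UNIV. gi k c * V c)"
definition N1 :: "('n \<Rightarrow> real) \<Rightarrow> real" where "N1 V = (\<Sum>a\<in>UNIV. \<Sum>b\<in>UNIV. gi a b * V a * V b)"

lemma N1_vr: "(\<Sum>k\<in>UNIV. V k * vr V k) = N1 V"
  unfolding N1_def vr_def by (simp add: sum_distrib_left mult_ac)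

lemma gigg_contr: "(\<Sum>a\<in>UNIV. gi i a * (\<Sum>b\<in>UNIV. gi j b * gg a b)) = gi i j"
proof -
  have "(\<Sum>b\<in>UNIV. gi j b * gg a b) = (if a = j then 1 else 0)" for a
  proof -
    have "(\<Sum>b\<in>UNIV. gi j b * gg a b) = (\<Sum>b\<in>UNIV. gg a b * gi b j)"
      by (rule sum.cong) (auto simp: gis mult.commute)
    then show ?thesis using ggi by simp
  qed
  then have "(\<Sum>a\<in>UNIV. gi i a * (\<Sum>b\<in>UNIV. gi j b * gg a b)) = (\<Sum>a\<in>UNIV. gi i a * (if a = j then 1 else 0))"
    by simp
  also have "\<dots> = gi i j" by (rule dsum4)
  finally show ?thesis .
qed

lemma raise_B1: "raise (\<lambda>a b c. gg a b * V c) i j k = gi i j * vr V k"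
proof -
  have "raise (\<lambda>a b c. gg a b * V c) i j k = (\<Sum>a\<in>UNIV. \<Sum>b\<in>UNIV. (gi i a * (gi j b * gg a b)) * (\<Sum>c\<in>UNIV. gi k c * V c))"
    unfolding raise_def by (simp add: sum_distrib_left mult_ac)
  also have "\<dots> = (\<Sum>a\<in>UNIV. gi i a * (\<Sum>b\<in>UNIV. gi j b * gg a b)) * vr V k"
    unfolding vr_def by (simp add: sum_distrib_left sum_distrib_right mult_ac)
  finally show ?thesis unfolding gigg_contr .
qed

lemma raise_B2: "raise (\<lambda>a b c. gg a c * V b) i j k = gi i k * vr V j"
proof -
  have "raise (\<lambda>a b c. gg a c * V b) i j k = (\<Sum>a\<in>UNIV. \<Sum>b\<in>UNIV. \<Sum>c\<in>UNIV. (gi i a * (gi k c * gg a c)) * (gi j b * V b))"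
    unfolding raise_def by (simp add: mult_ac)
  also have "\<dots> = (\<Sum>a\<in>UNIV. \<Sum>c\<in>UNIV. \<Sum>b\<in>UNIV. (gi i a * (gi k c * gg a c)) * (gi j b * V b))"
    by (intro sum.cong refl sum.swap)
  also have "\<dots> = (\<Sum>a\<in>UNIV. gi i a * (\<Sum>c\<in>UNIV. gi k c * gg a c)) * vr V j"
    unfolding vr_def by (simp add: sum_distrib_left sum_distrib_right mult_ac)
  finally show ?thesis unfolding gigg_contr .
qed

lemma raise_lin: "raise (\<lambda>i j k. \<alpha> * S1 i j k + \<beta> * S2 i j k) = (\<lambda>i j k. \<alpha> * raise S1 i j k + \<beta> * raise S2 i j k)"
  unfolding raise_def by (intro ext) (simp add: algebra_simps sum.distrib sum_distrib_left)

lemma norm_alg: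
  fixes rc :: "'n \<Rightarrow> 'n \<Rightarrow> real" and f RF V :: "'n \<Rightarrow> real" and sc PP QQ nn :: real
    and A C :: "'n \<Rightarrow> 'n \<Rightarrow> 'n \<Rightarrow> real"
  assumes rcs: "\<And>i j. rc i j = rc j i"
    and sc: "sc = (\<Sum>i\<in>UNIV. \<Sum>j\<in>UNIV. gi i j * rc i j)"
    and nn: "nn = real CARD('n)"
    and RF: "\<And>k. RF k = (\<Sum>b\<in>UNIV. \<Sum>c\<in>UNIV. gi b c * rc k b * f c)"
    and V: "\<And>k. V k = sc * f k - RF k"
    and A: "\<And>i j k. A i j k = rc i k * f j - rc i j * f k"
    and C: "\<And>i j k. C i j k = PP * A i j k + QQ * (gg i j * V k - gg i k * V j)"
  shows "N3 C = PP^2 * N3 A + (2 * QQ * (QQ * (nn - 1)) - 4 * PP * QQ) * N1 V"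
proof -
  define B1 where "B1 = (\<lambda>a b c. gg a b * V c)"
  define B2 where "B2 = (\<lambda>a b c. gg a c * V b)"
  define Bt where "Bt = (\<lambda>a b c. 1 * B1 a b c + (-1) * B2 a b c)"
  have Ceq: "C = (\<lambda>i j k. PP * A i j k + QQ * Bt i j k)"
    by (intro ext) (simp add: C Bt_def B1_def B2_def)
  have rB1: "raise B1 = (\<lambda>i j k. gi i j * vr V k)" unfolding B1_def using raise_B1 by (intro ext) simp
  have rB2: "raise B2 = (\<lambda>i j k. gi i k * vr V j)" unfolding B2_def using raise_B2 by (intro ext) simp
  have c1: "(\<Sum>i\<in>UNIV. \<Sum>j\<in>UNIV. gi i j * A i j k) = - V k" for k
  proof -
    have "(\<Sum>i\<in>UNIV. \<Sum>j\<in>UNIV. gi i j * A i j k) = (\<Sum>i\<in>UNIV. \<Sum>j\<in>UNIV. gi i j * rc k i * f j) - sc * f k"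
      unfolding A sc by (simp add: algebra_simps sum_subtractf sum_distrib_right sum_distrib_left rcs[of _ k])
    then show ?thesis using RF[of k] V[of k] by simp
  qed
  have c2: "(\<Sum>i\<in>UNIV. \<Sum>k\<in>UNIV. gi i k * A i j k) = V j" for j
  proof -
    have "(\<Sum>i\<in>UNIV. \<Sum>k\<in>UNIV. gi i k * A i j k) = sc * f j - (\<Sum>i\<in>UNIV. \<Sum>k\<in>UNIV. gi i k * rc j i * f k)"
      unfolding A sc by (simp add: algebra_simps sum_subtractf sum_distrib_right sum_distrib_left rcs[of _ j])
    then show ?thesis using RF[of j] V[of j] by simp
  qed
  have AB1: "B3 A B1 = - N1 V"
  proof -
    have "B3 A B1 = (\<Sum>k\<in>UNIV. (\<Sum>i\<in>UNIV. \<Sum>j\<in>UNIV. gi i j * A i j k) * vr V k)"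
    proof -
      have "B3 A B1 = (\<Sum>i\<in>UNIV. \<Sum>j\<in>UNIV. \<Sum>k\<in>UNIV. gi i j * A i j k * vr V k)"
        unfolding B3_def rB1 by (simp add: mult_ac)
      also have "\<dots> = (\<Sum>k\<in>UNIV. \<Sum>i\<in>UNIV. \<Sum>j\<in>UNIV. gi i j * A i j k * vr V k)"
        by (rule swap_13_gen)
      finally show ?thesis by (simp add: sum_distrib_right)
    qed
    also have "\<dots> = - N1 V" unfolding c1 N1_vr[symmetric] by (simp add: sum_negf)
    finally show ?thesis .
  qed
  have AB2: "B3 A B2 = N1 V"
  proof -
    have "B3 A B2 = (\<Sum>j\<in>UNIV. (\<Sum>i\<in>UNIV. \<Sum>k\<in>UNIV. gi i k * A i j k) * vr V j)"
    proof -
      have "B3 A B2 = (\<Sum>i\<in>UNIV. \<Sum>j\<in>UNIV. \<Sum>k\<in>UNIV. gi i k * A i j k * vr V j)"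
        unfolding B3_def rB2 by (simp add: mult_ac)
      also have "\<dots> = (\<Sum>j\<in>UNIV. \<Sum>i\<in>UNIV. \<Sum>k\<in>UNIV. gi i k * A i j k * vr V j)"
        by (rule sum.swap)
      finally show ?thesis by (simp add: sum_distrib_right)
    qed
    also have "\<dots> = N1 V" unfolding c2 N1_vr ..
    finally show ?thesis .
  qed
  have trn: "(\<Sum>i\<in>UNIV. \<Sum>j\<in>UNIV. gg i j * gi i j) = nn"
  proof -
    have "(\<Sum>i\<in>UNIV. \<Sum>j\<in>UNIV. gg i j * gi i j) = (\<Sum>i\<in>UNIV. \<Sum>j\<in>UNIV. gg i j * gi j i)"
      by (simp add: gis)
    also have "\<dots> = (\<Sum>i\<in>(UNIV::'n set). 1)" by (simp add: ggi)
    finally show ?thesis using nn by simp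
  qed
  have d: "(\<Sum>i\<in>UNIV. gg i j * gi i k) = (if j = k then 1 else 0)" for j k
  proof -
    have "(\<Sum>i\<in>UNIV. gg i j * gi i k) = (\<Sum>i\<in>UNIV. gg j i * gi i k)" by (simp add: ggs)
    then show ?thesis by (simp add: ggi)
  qed
  have B11: "B3 B1 B1 = nn * N1 V"
  proof -
    have "B3 B1 B1 = (\<Sum>i\<in>UNIV. \<Sum>j\<in>UNIV. gg i j * gi i j * (\<Sum>k\<in>UNIV. V k * vr V k))"
      unfolding B3_def rB1 by (simp add: B1_def sum_distrib_left mult_ac)
    also have "\<dots> = nn * N1 V" unfolding N1_vr sum_distrib_right[symmetric] trn ..
    finally show ?thesis .
  qed
  have B22: "B3 B2 B2 = nn * N1 V"
  proof -
    have "B3 B2 B2 = (\<Sum>i\<in>UNIV. \<Sum>j\<in>UNIV. \<Sum>k\<in>UNIV. gg i k * gi i k * (V j * vr V j))"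
      unfolding B3_def rB2 by (simp add: B2_def mult_ac)
    also have "\<dots> = (\<Sum>i\<in>UNIV. \<Sum>k\<in>UNIV. \<Sum>j\<in>UNIV. gg i k * gi i k * (V j * vr V j))"
      by (intro sum.cong refl sum.swap)
    also have "\<dots> = (\<Sum>i\<in>UNIV. \<Sum>k\<in>UNIV. gg i k * gi i k) * (\<Sum>j\<in>UNIV. V j * vr V j)"
      by (simp only: sum_distrib_left[symmetric] sum_distrib_right[symmetric])
    also have "\<dots> = nn * N1 V" unfolding N1_vr trn ..
    finally show ?thesis .
  qed
  have B12: "B3 B1 B2 = N1 V"
  proof -
    have "B3 B1 B2 = (\<Sum>i\<in>UNIV. \<Sum>j\<in>UNIV. \<Sum>k\<in>UNIV. gg i j * gi i k * (V k * vr V j))"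
      unfolding B3_def rB2 by (simp add: B1_def mult_ac)
    also have "\<dots> = (\<Sum>j\<in>UNIV. \<Sum>k\<in>UNIV. \<Sum>i\<in>UNIV. gg i j * gi i k * (V k * vr V j))"
      by (rule swap_13_gen2)
    also have "\<dots> = (\<Sum>j\<in>UNIV. \<Sum>k\<in>UNIV. (\<Sum>i\<in>UNIV. gg i j * gi i k) * (V k * vr V j))"
      by (simp add: sum_distrib_right)
    also have "\<dots> = (\<Sum>j\<in>UNIV. V j * vr V j)" unfolding d by (simp add: mult.commute)
    finally show ?thesis unfolding N1_vr .
  qed
  have "N3 C = PP * (PP * B3 A A + QQ * B3 A Bt) + QQ * (PP * B3 Bt A + QQ * B3 Bt Bt)"
    unfolding N3_B3 Ceq B3_lin1 B3_lin2 ..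
  also have "B3 A Bt = - 2 * N1 V" unfolding Bt_def B3_lin2 AB1 AB2 by simp
  also have "B3 Bt A = - 2 * N1 V" using \<open>B3 A Bt = - 2 * N1 V\<close> B3_sym by metis
  also have "B3 Bt Bt = (2 * nn - 2) * N1 V"
    unfolding Bt_def B3_lin1 B3_lin2 B11 B22 B12 using B3_sym[of B2 B1] B12 by (simp add: algebra_simps)
  finally show ?thesis unfolding N3_B3[symmetric] by (simp add: algebra_simps power2_eq_square)
qed

end

context sol begin

definition RF :: "'n \<Rightarrow> real^'n \<Rightarrow> real" where
  "RF k x = (\<Sum>b\<in>UNIV. \<Sum>c\<in>UNIV. ginv g b c x * ric g k b x * pd c F x)"

lemma ricm_F: "(\<Sum>e\<in>UNIV. ricm k e x * pd e F x) = RF k x"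
proof -
  have "(\<Sum>e\<in>UNIV. ricm k e x * pd e F x) = (\<Sum>e\<in>UNIV. \<Sum>l\<in>UNIV. ginv g l e x * ric g k l x * pd e F x)"
    unfolding ricm_def by (simp add: sum_distrib_right sum_distrib_left mult_ac)
  also have "\<dots> = RF k x" unfolding RF_def by (rule sum.swap)
  finally show ?thesis .
qed

lemma RiemF: assumes x: "x \<in> U"
  shows "(\<Sum>e\<in>UNIV. riem g k j i e x * pd e F x) = PP * (ric g j i x * pd k F x - ric g k i x * pd j F x
      + (g j i x * RF k x - g k i x * RF j x)) - QQ * (scal g x * g j i x * pd k F x - scal g x * g k i x * pd j F x)"
proof -
  have "(\<Sum>e\<in>UNIV. riem g k j i e x * pd e F x) = (\<Sum>e\<in>UNIV. Ew k j i e x * pd e F x)"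
    using riem_E[OF x] by simp
  also have "\<dots> = PP * (ric g j i x * (\<Sum>e\<in>UNIV. dl k e x * pd e F x) - ric g k i x * (\<Sum>e\<in>UNIV. dl j e x * pd e F x)
      + (g j i x * (\<Sum>e\<in>UNIV. ricm k e x * pd e F x) - g k i x * (\<Sum>e\<in>UNIV. ricm j e x * pd e F x)))
      - QQ * (sg j i x * (\<Sum>e\<in>UNIV. dl k e x * pd e F x) - sg k i x * (\<Sum>e\<in>UNIV. dl j e x * pd e F x))"
    unfolding Ew_def by (simp add: algebra_simps sum.distrib sum_subtractf sum_distrib_left)
  also have "\<dots> = PP * (ric g j i x * pd k F x - ric g k i x * pd j F x
      + (g j i x * RF k x - g k i x * RF j x)) - QQ * (scal g x * g j i x * pd k F x - scal g x * g k i x * pd j F x)"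
    unfolding ricm_F dl_def sg_def by simp
  finally show ?thesis .
qed

lemma ds_RF: assumes x: "x \<in> U" shows "pd k (scal g) x = - 2 * RF k x"
proof -
  have cb: "2 * (\<Sum>a\<in>UNIV. Rm2 a k a x) = pd k (scal g) x" by (rule contracted_bianchi[OF x])
  have dv: "(\<Sum>i\<in>UNIV. \<Sum>j\<in>UNIV. ginv g i j x * cov_ric g j i k x) = (\<Sum>a\<in>UNIV. Rm2 a k a x)"
  proof -
    have "(\<Sum>i\<in>UNIV. \<Sum>j\<in>UNIV. ginv g i j x * cov_ric g j i k x) = (\<Sum>j\<in>UNIV. \<Sum>i\<in>UNIV. ginv g i j x * cov_ric g j i k x)"
      by (rule sum.swap)
    also have "\<dots> = (\<Sum>a\<in>UNIV. Rm2 a k a x)"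
      unfolding Rm2_def by (intro sum.cong refl) (simp add: cov_ric_sym[OF x, of _ k] ginv_sym[OF x] mult.commute)
    finally show ?thesis .
  qed
  have lhs: "(\<Sum>i\<in>UNIV. \<Sum>j\<in>UNIV. ginv g i j x * (cov_ric g k i j x - cov_ric g j i k x))
      = pd k (scal g) x - (\<Sum>a\<in>UNIV. Rm2 a k a x)"
    unfolding right_diff_distrib sum_subtractf trace_cov[OF x] dv ..
  have sc: "scal g x = (\<Sum>i\<in>UNIV. \<Sum>j\<in>UNIV. ginv g i j x * ric g j i x)"
    unfolding scal_def by (simp add: ric_sym[OF x])
  have t1: "(\<Sum>i\<in>UNIV. \<Sum>j\<in>UNIV. ginv g i j x * (ric g k i x * pd j F x)) = RF k x"
    unfolding RF_def by (simp add: mult_ac)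
  have t2: "(\<Sum>i\<in>UNIV. \<Sum>j\<in>UNIV. ginv g i j x * (g j i x * c)) = nn * c" for c
  proof -
    have "(\<Sum>i\<in>UNIV. \<Sum>j\<in>UNIV. ginv g i j x * (g j i x * c)) = (\<Sum>i\<in>UNIV. (\<Sum>j\<in>UNIV. ginv g i j x * g j i x) * c)"
      by (simp add: sum_distrib_right sum_distrib_left mult_ac)
    also have "\<dots> = (\<Sum>i\<in>(UNIV::'n set). c)" by (simp add: ginv_g[OF x])
    finally show ?thesis unfolding nn_def by simp
  qed
  have t3: "(\<Sum>i\<in>UNIV. \<Sum>j\<in>UNIV. ginv g i j x * (g k i x * h j)) = h k" for h
  proof -
    have "(\<Sum>i\<in>UNIV. \<Sum>j\<in>UNIV. ginv g i j x * (g k i x * h j)) = (\<Sum>j\<in>UNIV. \<Sum>i\<in>UNIV. ginv g i j x * (g k i x * h j))"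
      by (rule sum.swap)
    also have "\<dots> = (\<Sum>j\<in>UNIV. (\<Sum>i\<in>UNIV. g k i x * ginv g i j x) * h j)"
      by (simp add: sum_distrib_right sum_distrib_left mult_ac)
    also have "\<dots> = h k" by (simp add: g_ginv[OF x])
    finally show ?thesis .
  qed
  have t4: "(\<Sum>i\<in>UNIV. \<Sum>j\<in>UNIV. ginv g i j x * (ric g j i x * c)) = scal g x * c" for c
    unfolding sc by (simp add: sum_distrib_right sum_distrib_left mult_ac)
  have rhs: "(\<Sum>i\<in>UNIV. \<Sum>j\<in>UNIV. ginv g i j x * (cov_ric g k i j x - cov_ric g j i k x)) = - RF k x"
  proof -
    have "(\<Sum>i\<in>UNIV. \<Sum>j\<in>UNIV. ginv g i j x * (cov_ric g k i j x - cov_ric g j i k x))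
      = (\<Sum>i\<in>UNIV. \<Sum>j\<in>UNIV. - PP * (ginv g i j x * (ric g j i x * pd k F x)) + PP * (ginv g i j x * (ric g k i x * pd j F x))
          - PP * (ginv g i j x * (g j i x * RF k x)) + PP * (ginv g i j x * (g k i x * RF j x))
          + QQ * scal g x * (ginv g i j x * (g j i x * pd k F x)) - QQ * scal g x * (ginv g i j x * (g k i x * pd j F x)))"
      unfolding cotton_riem[OF x] RiemF[OF x] by (intro sum.cong refl) (simp add: algebra_simps)
    also have "\<dots> = - PP * (scal g x * pd k F x) + PP * RF k x - PP * (nn * RF k x) + PP * RF k x
          + QQ * scal g x * (nn * pd k F x) - QQ * scal g x * pd k F x"
      unfolding sum.distrib sum_subtractf sum_distrib_left[symmetric] t1 t2 t3[of "\<lambda>j. RF j x"] t3[of "\<lambda>j. pd j F x"] t4 ..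
    also have "\<dots> = - (PP * (nn - 2)) * RF k x + (QQ * (nn - 1) - PP) * scal g x * pd k F x"
      by (simp add: algebra_simps)
    also have "\<dots> = - RF k x" unfolding PQ1 PQ2 by simp
    finally show ?thesis .
  qed
  show ?thesis using lhs rhs cb by linarith
qed

lemma cotton_formula: assumes x: "x \<in> U"
  shows "cotton g i j k x = PP * (ric g i k x * pd j F x - ric g i j x * pd k F x)
     + QQ * (g i j x * (scal g x * pd k F x - RF k x) - g i k x * (scal g x * pd j F x - RF j x))"
proof -
  have h: "1 / (2 * (nn - 1)) * 2 = PP - QQ"
  proof -
    have n: "nn - 1 \<noteq> 0" "nn - 2 \<noteq> 0" using nn3 by auto
    have q: "QQ = PP / (nn - 1)" using PQ2 n by (simp add: field_simps)
    have "PP - QQ = (PP * (nn - 2)) / (nn - 1)" unfolding q using n by (simp add: field_simps)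
    also have "\<dots> = 1 / (nn - 1)" unfolding PQ1 ..
    also have "\<dots> = 1 / (2 * (nn - 1)) * 2" using n by (simp add: field_simps)
    finally show ?thesis by simp
  qed
  have "cotton g i j k x = - (PP * (ric g j i x * pd k F x - ric g k i x * pd j F x
      + (g j i x * RF k x - g k i x * RF j x)) - QQ * (scal g x * g j i x * pd k F x - scal g x * g k i x * pd j F x))
      + (1 / (2 * (nn - 1)) * 2) * (g i j x * RF k x - g i k x * RF j x)"
    unfolding cotton_def cotton_riem[OF x] RiemF[OF x] ds_RF[OF x] nn_def[symmetric]
    by (simp add: algebra_simps)
  also have "\<dots> = PP * (ric g i k x * pd j F x - ric g i j x * pd k F x)
     + QQ * (g i j x * (scal g x * pd k F x - RF k x) - g i k x * (scal g x * pd j F x - RF j x))"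
    unfolding h using ric_sym[OF x, of i j] ric_sym[OF x, of i k] g_sym[OF x, of i j] g_sym[OF x, of i k]
    by (simp add: algebra_simps)
  finally show ?thesis .
qed

end

context sol begin

lemma main: assumes x: "x \<in> U"
  shows "norm3 g x (\<lambda>i j k. cotton g i j k x) =
     (1 / (real CARD('n) - 2)^2) *
       (norm3 g x (\<lambda>i j k. ric g i k x * pd j F x - ric g i j x * pd k F x)
        - (2 / (real CARD('n) - 1)) *
            norm1 g x (\<lambda>a. scal g x * pd a F x - (1/2) * pd a (Grho g F \<rho>) x))"
proof -
  interpret T: tens2 "\<lambda>i j. ginv g i j x" "\<lambda>i j. g i j x"
    by unfold_locales (use ginv_sym[OF x] g_sym[OF x] ginv_g[OF x] in auto)
  have n3: "norm3 g x S = T.N3 S" for S unfolding norm3_def T.N3_def ..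
  have n1: "norm1 g x V = T.N1 V" for V unfolding norm1_def T.N1_def ..
  have Veq: "(\<lambda>a. scal g x * pd a F x - (1/2) * pd a (Grho g F \<rho>) x) = (\<lambda>a. scal g x * pd a F x - RF a x)"
  proof (intro ext)
    fix a
    have "(1/2) * pd a (Grho g F \<rho>) x = RF a x"
      unfolding Grho_pd[OF x] RF_def by (intro sum.cong refl; simp add: mult_ac)
    then show "scal g x * pd a F x - (1/2) * pd a (Grho g F \<rho>) x = scal g x * pd a F x - RF a x" by simp
  qed
  have na: "T.N3 (\<lambda>i j k. cotton g i j k x) = PP^2 * T.N3 (\<lambda>i j k. ric g i k x * pd j F x - ric g i j x * pd k F x)
     + (2 * QQ * (QQ * (nn - 1)) - 4 * PP * QQ) * T.N1 (\<lambda>a. scal g x * pd a F x - RF a x)"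
    by (rule T.norm_alg[where rc="\<lambda>i j. ric g i j x" and f="\<lambda>a. pd a F x" and sc="scal g x"
         and RF="\<lambda>k. RF k x" and PP=PP and QQ=QQ and nn=nn])
       (use ric_sym[OF x] nn_def cotton_formula[OF x] in \<open>auto simp: scal_def RF_def\<close>)
  have n: "nn - 1 \<noteq> 0" "nn - 2 \<noteq> 0" using nn3 by auto
  have ar: "(2 * QQ * (QQ * (nn - 1)) - 4 * PP * QQ) = - (1 / (nn - 2)^2) * (2 / (nn - 1))"
    unfolding PQ2 unfolding PP_def QQ_def using n by (simp add: field_simps power2_eq_square)
  have pp: "PP^2 = 1 / (nn - 2)^2" unfolding PP_def by (simp add: power_divide)
  show ?thesis unfolding n3 n1 Veq na ar pp nn_def[symmetric] by (simp add: algebra_simps)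
qed

end

theorem lemma4p1:
  fixes U :: "(real^'n::finite) set"
    and g :: "'n \<Rightarrow> 'n \<Rightarrow> real^'n \<Rightarrow> real"
    and F :: "real^'n \<Rightarrow> real"
    and \<rho> :: real
  assumes dim: "CARD('n) \<ge> 3"
    and metric: "is_metric U g"
    and smoothF: "smooth_on U F"
    and rho: "\<rho> = 1/2 \<or> \<rho> = -1/2"
    and soliton: "\<forall>x\<in>U. \<forall>i j. ric g i j x = hess g F i j x + \<rho> * g i j x"
    and weyl0: "\<forall>x\<in>U. \<forall>i j k l. weyl g i j k l x = 0"
  shows "\<forall>x\<in>U. norm3 g x (\<lambda>i j k. cotton g i j k x) =
     (1 / (real CARD('n) - 2)^2) *
       (norm3 g x (\<lambda>i j k. ric g i k x * pd j F x - ric g i j x * pd k F x)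
        - (2 / (real CARD('n) - 1)) *
            norm1 g x (\<lambda>a. scal g x * pd a F x - (1/2) * pd a (Grho g F \<rho>) x))"
proof -
  interpret sol U g F \<rho>
    by unfold_locales (use metric soliton weyl0 dim smoothF in \<open>auto simp: is_metric_def\<close>)
  show ?thesis using main by blast
qed

end
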